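(* Let $i\ge1$, let $u$ be any word of length $n$ of type $(m_1,\dots,m_{i-1})$, and let $m_i$ be a positive integer with $c:=m_1+\dots+m_i\le n$. Then the sum, over all queues $q$ of capacity $c$ (i.e. over all $c$-element subsets of terminal sites), of the weight of $q$ with respect to $u$ equals \[ h_{n-c}(\underbrace{t_1,\dots,t_1}_{m_1},\underbrace{t_2,\dots,t_2}_{m_2},\dots,\underbrace{t_{i-1},\dots,t_{i-1}}_{m_{i-1}},\underbrace{t_i,\dots,t_i}_{m_i+1}), \] where $h_k$ denotes the complete homogeneous symmetric polynomial of degree $k$.
   Context: Fix a positive integer $n$; sites $1,\dots,n$ are arranged cyclically. A word is $w=w_1\cdots w_n\in\{1,2,\dots,\infty\}^n$; finite entries are particles (of size equal to the entry), entries $\infty$ are empty sites. A word has type $(m_1,\dots,m_{i-1})$ (positive integers) if it has exactly $m_j$ entries equal to $j$ for $1\le j\le i-1$ and all other entries $\infty$. Queues: a queue of capacity $c$ is a choice of $c$ of the $n$ sites, called terminal. Given the input word $u$ (finite entries in $\{1,\dots,i-1\}$), replace each $\infty$ by $i$; then the $n$ particles enter the queue one at a time in an order in which smaller particles come before larger ones (ties arbitrary). A particle at site $j$ first visits site $j$, then $j+1,j+2,\dots$ cyclically, stopping at (and occupying) the first terminal site not yet occupied; if all terminal sites are occupied it visits every site and is discarded. For each size $s\in\{1,\dots,i\}$ let $\alpha_s$ be the number of non-terminal sites whose first visitor has size $s$; the weight of $q$ with respect to $u$ is $\prod_{s=1}^{i} t_s^{\alpha_s}$ (independent of tie-breaking).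 *)

theory Defs
  imports Main "HOL-Library.Extended_Nat" "HOL-Library.Product_Lexorder"
begin

(* Sites 1..n of the paper are represented as 0..n-1 (cyclic, successor = Suc mod n).
   A word is a list of length n over enat; \<infinity> is an empty site. *)

definition has_type :: "enat list \<Rightarrow> nat list \<Rightarrow> bool" where
  "has_type u ms \<longleftrightarrow>
     (\<forall>x\<in>set u. x = \<infinity> \<or> (\<exists>j\<in>{1..length ms}. x = enat j)) \<and>
     (\<forall>j\<in>{1..length ms}. length (filter (\<lambda>x. x = enat j) u) = ms ! (j - 1))"

definition psize :: "nat \<Rightarrow> enat list \<Rightarrow> nat \<Rightarrow> nat" where
  "psize i u k = (case u ! k of enat a \<Rightarrow> a | \<infinity> \<Rightarrow> i)"

(* a fixed admissible entry order: by size, ties broken by site index *)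
definition entry_order :: "nat \<Rightarrow> enat list \<Rightarrow> nat list" where
  "entry_order i u = sort_key (\<lambda>k. (psize i u k, k)) [0..<length u]"

(* one particle of size s, starting at site j, entering the queue Q on n sites.
   State: (occupied terminal sites, size of first visitor of each site). *)
definition step :: "nat \<Rightarrow> nat set \<Rightarrow> nat \<Rightarrow> nat \<Rightarrow>
     nat set \<times> (nat \<Rightarrow> nat option) \<Rightarrow> nat set \<times> (nat \<Rightarrow> nat option)" where
  "step n Q j s st =
     (let occ = fst st; fv = snd st;
          free = Q - occ;
          d = (if free = {} then n - 1 else (LEAST d. (j + d) mod n \<in> free));
          visited = set (map (\<lambda>d'. (j + d') mod n) [0..<Suc d]);
          occ' = (if free = {} then occ else insert ((j + d) mod n) occ);
          fv' = (\<lambda>x. if x \<in> visited \<and> fv x = None then Some s else fv x)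
      in (occ', fv'))"

definition first_visitor :: "nat \<Rightarrow> nat set \<Rightarrow> enat list \<Rightarrow> nat \<Rightarrow> nat option" where
  "first_visitor i Q u =
     snd (fold (\<lambda>k st. step (length u) Q k (psize i u k) st) (entry_order i u) ({}, (\<lambda>_. None)))"

definition queue_weight :: "nat \<Rightarrow> (nat \<Rightarrow> 'a::comm_ring_1) \<Rightarrow> nat set \<Rightarrow> enat list \<Rightarrow> 'a" where
  "queue_weight i t Q u =
     (\<Prod>s\<in>{1..i}. t s ^ card {x \<in> {0..<length u} - Q. first_visitor i Q u x = Some s})"

definition hcomplete :: "nat \<Rightarrow> 'a::comm_ring_1 list \<Rightarrow> 'a" where
  "hcomplete k xs =
     (\<Sum>e\<in>{e :: nat \<Rightarrow> nat. (\<forall>j\<ge>length xs. e j = 0) \<and> (\<Sum>j<length xs. e j) = k}.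
        \<Prod>j<length xs. xs ! j ^ e j)"

end

theory Submission
  imports Defs
begin


definition predn :: "nat \<Rightarrow> nat \<Rightarrow> nat" where "predn n z = (z + n - 1) mod n"
definition ind :: "bool \<Rightarrow> nat" where "ind b = (if b then 1 else 0)"

definition Inv :: "nat \<Rightarrow> nat set \<Rightarrow> nat set \<Rightarrow> nat set \<Rightarrow> nat set \<Rightarrow> (nat \<Rightarrow> nat) \<Rightarrow> bool" where
  "Inv n Q P Oc D f \<longleftrightarrow> finite P \<and> Oc \<subseteq> Q \<and> card Oc = card P \<and>
     (\<forall>z<n. f (predn n z) + ind (z \<in> P) = ind (z \<in> Oc) + f z) \<and>
     (\<forall>z<n. z \<in> Q - Oc \<longrightarrow> f (predn n z) + ind (z \<in> P) = 0) \<and>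
     (\<forall>z<n. z \<in> D \<longleftrightarrow> 0 < f (predn n z) + ind (z \<in> P))"

lemma modL1: assumes "(p::nat) < n" "z < n" shows "(p + (z + n - p) mod n) mod n = z"
proof -
  have "(p + (z + n - p) mod n) mod n = (p + (z + n - p)) mod n" by (simp add: mod_add_right_eq)
  also have "p + (z + n - p) = z + n" using assms by simp
  finally show ?thesis using assms by simp
qed

lemma modL2: assumes "(p::nat) < n" "d < n" shows "((p + d) mod n + n - p) mod n = d"
proof -
  have "((p + d) mod n + n - p) mod n = ((p + d) mod n + (n - p)) mod n" using assms by simp
  also have "\<dots> = (p + d + (n - p)) mod n" by (simp add: mod_add_left_eq)
  also have "p + d + (n - p) = d + n" using assms by simp
  finally show ?thesis using assms by simp
qed

lemma modL3: assumes "(p::nat) < n" "z < n"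
  shows "(predn n z + n - p) mod n = (if (z + n - p) mod n = 0 then n - 1 else (z + n - p) mod n - 1)"
proof -
  define ov where "ov = (z + n - p) mod n"
  have ov: "ov < n" using assms by (simp add: ov_def)
  have z: "z = (p + ov) mod n" using modL1[OF assms] by (simp add: ov_def)
  have "predn n z = (z + (n - 1)) mod n" unfolding predn_def using assms by simp
  also have "\<dots> = (p + ov + (n - 1)) mod n" unfolding z by (simp add: mod_add_left_eq)
  finally have pz: "predn n z = (p + ov + (n - 1)) mod n" .
  show ?thesis
  proof (cases "ov = 0")
    case True
    have "predn n z = (p + (n - 1)) mod n" using pz True by simp
    then show ?thesis using modL2[OF assms(1), of "n - 1"] assms True ov_def by simp
  next
    case False
    have "predn n z = ((p + (ov - 1)) + n) mod n" using pz False assms by (simp add: algebra_simps)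
    also have "\<dots> = (p + (ov - 1)) mod n" by simp
    finally show ?thesis using modL2[OF assms(1), of "ov - 1"] ov False ov_def by simp
  qed
qed

lemma step_eq:
  assumes "Q - fst st \<noteq> {}"
  shows "step n Q j s st =
    (insert ((j + (LEAST d. (j + d) mod n \<in> Q - fst st)) mod n) (fst st),
     \<lambda>x. if x \<in> set (map (\<lambda>d'. (j + d') mod n) [0..<Suc (LEAST d. (j + d) mod n \<in> Q - fst st)]) \<and> snd st x = None
          then Some s else snd st x)"
  using assms by (simp add: step_def Let_def)

lemma step_inv:
  assumes inv: "Inv n Q P (fst st) {z. snd st z \<noteq> None} f"
    and n: "0 < n" and Q: "Q \<subseteq> {..<n}" and p: "p < n" "p \<notin> P"
    and card: "card P < card Q"
  shows "\<exists>f'. Inv n Q (insert p P) (fst (step n Q p s st)) {z. snd (step n Q p s st) z \<noteq> None} f'"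
proof -
  define Oc where "Oc = fst st"
  define fv where "fv = snd st"
  have fQ: "finite Q" using Q finite_subset by blast
  have I: "finite P" "Oc \<subseteq> Q" "card Oc = card P"
    "\<forall>z<n. f (predn n z) + ind (z \<in> P) = ind (z \<in> Oc) + f z"
    "\<forall>z<n. z \<in> Q - Oc \<longrightarrow> f (predn n z) + ind (z \<in> P) = 0"
    "\<forall>z<n. (fv z \<noteq> None) \<longleftrightarrow> 0 < f (predn n z) + ind (z \<in> P)"
    using inv by (auto simp: Inv_def Oc_def fv_def)
  have free: "Q - Oc \<noteq> {}"
  proof
    assume "Q - Oc = {}"
    then have "Q \<subseteq> Oc" by blast
    then have "card Q \<le> card Oc" using I(2) fQ by (simp add: card_mono finite_subset)
    then show False using I(3) card by simp
  qed
  define off where "off z = (z + n - p) mod n" for z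
  define d where "d = (LEAST d. (p + d) mod n \<in> Q - Oc)"
  define e where "e = (p + d) mod n"
  obtain z0 where z0: "z0 \<in> Q - Oc" using free by blast
  have z0n: "z0 < n" using z0 Q by auto
  have ex: "(p + off z0) mod n \<in> Q - Oc" using modL1[OF p(1) z0n] z0 by (simp add: off_def)
  have dle: "d \<le> off z0" unfolding d_def by (rule Least_le) (rule ex)
  have dn: "d < n" using dle n by (simp add: off_def) (meson order_le_less_trans mod_less_divisor)
  have efree: "e \<in> Q - Oc" unfolding e_def d_def by (rule LeastI) (rule ex)
  have en: "e < n" using efree Q by auto
  have offlt: "off z < n" for z using n by (simp add: off_def)
  have offinv: "z < n \<Longrightarrow> (p + off z) mod n = z" for z using modL1[OF p(1)] by (simp add: off_def)
  have offinv2: "d' < n \<Longrightarrow> off ((p + d') mod n) = d'" for d' using modL2[OF p(1)] by (simp add: off_def)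
  have offp: "z < n \<Longrightarrow> z = p \<longleftrightarrow> off z = 0" for z
    using offinv[of z] offinv2[of 0] n p by auto
  have offe: "z < n \<Longrightarrow> z = e \<longleftrightarrow> off z = d" for z
    using offinv[of z] offinv2[of d] dn unfolding e_def by auto
  have offpred: "z < n \<Longrightarrow> off (predn n z) = (if off z = 0 then n - 1 else off z - 1)" for z
    using modL3[OF p(1)] by (simp add: off_def)
  have prn: "predn n z < n" for z using n by (simp add: predn_def)
  have minfree: "z < n \<Longrightarrow> z \<in> Q - Oc \<Longrightarrow> d \<le> off z" for z
    unfolding d_def by (rule Least_le) (simp add: offinv)
  have vis: "z \<in> set (map (\<lambda>d'. (p + d') mod n) [0..<Suc d]) \<longleftrightarrow> z < n \<and> off z \<le> d" for z
  proof
    assume "z \<in> set (map (\<lambda>d'. (p + d') mod n) [0..<Suc d])"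
    then obtain d' where "d' < Suc d" "z = (p + d') mod n" by (auto simp del: upt_Suc)
    then show "z < n \<and> off z \<le> d" using offinv2[of d'] dn n by simp
  next
    assume h: "z < n \<and> off z \<le> d"
    have m: "off z \<in> set [0..<Suc d]" using h by (simp del: upt_Suc)
    have "z = (p + off z) mod n" using offinv h by simp
    then show "z \<in> set (map (\<lambda>d'. (p + d') mod n) [0..<Suc d])"
      unfolding set_map by (rule rev_image_eqI[OF m])
  qed
  have st': "step n Q p s st = (insert e Oc, \<lambda>x. if x \<in> set (map (\<lambda>d'. (p + d') mod n) [0..<Suc d]) \<and> fv x = None then Some s else fv x)"
    unfolding Oc_def fv_def d_def e_def by (rule step_eq) (use free in \<open>simp add: Oc_def\<close>)
  define f' where "f' z = f z + ind (off z < d)" for z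
  have eO: "e \<notin> Oc" using efree by simp
  have fin_Oc: "finite Oc" using I(2) fQ finite_subset by blast
  have "Inv n Q (insert p P) (insert e Oc) {z. (if z \<in> set (map (\<lambda>d'. (p + d') mod n) [0..<Suc d]) \<and> fv z = None then Some s else fv z) \<noteq> None} f'"
    unfolding Inv_def
  proof (intro conjI allI impI)
    show "finite (insert p P)" using I(1) by simp
    show "insert e Oc \<subseteq> Q" using I(2) efree by auto
    show "card (insert e Oc) = card (insert p P)" using I(1,3) eO fin_Oc p(2) by simp
  next
    fix z assume z: "z < n"
    have c: "f (predn n z) + ind (z \<in> P) = ind (z \<in> Oc) + f z" using I(4) z by simp
    have key: "ind (off (predn n z) < d) + ind (z = p) = ind (z = e) + ind (off z < d)"
      using offpred[OF z] offp[OF z] offe[OF z] dn by (auto simp: ind_def)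
    show "f' (predn n z) + ind (z \<in> insert p P) = ind (z \<in> insert e Oc) + f' z"
      using c key p(2) eO by (auto simp: f'_def ind_def split: if_splits)
  next
    fix z assume z: "z < n" and zf: "z \<in> Q - insert e Oc"
    have c: "f (predn n z) + ind (z \<in> P) = 0" using I(5) z zf by simp
    have "d \<le> off z" using minfree[OF z] zf by simp
    moreover have "off z \<noteq> d" using offe[OF z] zf by simp
    ultimately have gt: "d < off z" by simp
    then have "z \<noteq> p" using offp[OF z] by simp
    moreover have "\<not> off (predn n z) < d" using offpred[OF z] gt by simp
    ultimately show "f' (predn n z) + ind (z \<in> insert p P) = 0"
      using c by (simp add: f'_def ind_def)
  next
    fix z assume z: "z < n"
    have old: "(fv z \<noteq> None) \<longleftrightarrow> 0 < f (predn n z) + ind (z \<in> P)" using I(6) z by simp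
    have "(z \<in> {z. (if z \<in> set (map (\<lambda>d'. (p + d') mod n) [0..<Suc d]) \<and> fv z = None then Some s else fv z) \<noteq> None})
          \<longleftrightarrow> fv z \<noteq> None \<or> off z \<le> d"
      using vis[of z] z by auto
    also have "\<dots> \<longleftrightarrow> 0 < f' (predn n z) + ind (z \<in> insert p P)"
      using old offpred[OF z] offp[OF z] dn by (auto simp: f'_def ind_def)
    finally show "(z \<in> {z. (if z \<in> set (map (\<lambda>d'. (p + d') mod n) [0..<Suc d]) \<and> fv z = None then Some s else fv z) \<noteq> None})
          \<longleftrightarrow> 0 < f' (predn n z) + ind (z \<in> insert p P)" .
  qed
  then show ?thesis unfolding st' fst_conv snd_conv by blast
qed


lemma fold_inv:
  assumes "distinct L" "set L \<subseteq> {..<n}" "card (set L) < card Q" "Q \<subseteq> {..<n}" "0 < n"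
  shows "\<exists>f. Inv n Q (set L) (fst (fold (\<lambda>k st. step n Q k (sz k) st) L ({}, \<lambda>_. None)))
                {z. snd (fold (\<lambda>k st. step n Q k (sz k) st) L ({}, \<lambda>_. None)) z \<noteq> None} f"
  using assms
proof (induction L rule: rev_induct)
  case Nil
  have "Inv n Q {} {} {} (\<lambda>_. 0)" by (simp add: Inv_def ind_def)
  then show ?case by auto
next
  case (snoc x xs)
  have fQ: "finite Q" using snoc.prems(4) finite_subset by blast
  have c: "card (set xs) < card Q"
  proof -
    have "card (set xs) \<le> card (set (xs @ [x]))" by (rule card_mono) auto
    then show ?thesis using snoc.prems(3) by linarith
  qed
  obtain f where f: "Inv n Q (set xs) (fst (fold (\<lambda>k st. step n Q k (sz k) st) xs ({}, \<lambda>_. None)))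
                {z. snd (fold (\<lambda>k st. step n Q k (sz k) st) xs ({}, \<lambda>_. None)) z \<noteq> None} f"
    using snoc.IH snoc.prems c by auto
  have "\<exists>f'. Inv n Q (insert x (set xs)) (fst (step n Q x (sz x) (fold (\<lambda>k st. step n Q k (sz k) st) xs ({}, \<lambda>_. None))))
        {z. snd (step n Q x (sz x) (fold (\<lambda>k st. step n Q k (sz k) st) xs ({}, \<lambda>_. None))) z \<noteq> None} f'"
    by (rule step_inv[OF f]) (use snoc.prems c in auto)
  then show ?case by simp
qed

lemma inv_D_iff:
  assumes inv: "Inv n Q P Oc D f" and x: "x < n" "x \<notin> Q"
  shows "x \<in> D \<longleftrightarrow> 0 < f x"
proof -
  have "x \<notin> Oc" using inv x by (auto simp: Inv_def)
  then show ?thesis using inv x by (auto simp: Inv_def ind_def)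
qed

lemma mod_hit: assumes "0 < (n::nat)" "z < n" shows "\<exists>l<n. (b + l) mod n = z"
proof -
  have "(b mod n + (z + n - b mod n) mod n) mod n = z" using modL1[of "b mod n" n z] assms by simp
  then have "(b + (z + n - b mod n) mod n) mod n = z" by (simp add: mod_add_left_eq)
  then show ?thesis using assms by (intro exI[of _ "(z + n - b mod n) mod n"]) simp
qed

lemma inv_arc:
  assumes inv: "Inv n Q P Oc D f" and card: "card P < card Q" and Q: "Q \<subseteq> {..<n}"
    and n: "0 < n" and x: "x < n" "x \<notin> Q"
  shows "0 < f x \<longleftrightarrow> (\<exists>k<n. 0 < (\<Sum>l\<in>{k..<n}. int (ind ((x + 1 + l) mod n \<in> P)) - int (ind ((x + 1 + l) mod n \<in> Q))))"
proof -
  have fQ: "finite Q" using Q finite_subset by blast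
  have I: "finite P" "Oc \<subseteq> Q" "card Oc = card P"
    "\<forall>z<n. f (predn n z) + ind (z \<in> P) = ind (z \<in> Oc) + f z"
    "\<forall>z<n. z \<in> Q - Oc \<longrightarrow> f (predn n z) + ind (z \<in> P) = 0"
    using inv by (auto simp: Inv_def)
  define w where "w l = (x + 1 + l) mod n" for l
  define g where "g l = int (f ((x + l) mod n))" for l
  have wn: "w l < n" for l using n by (simp add: w_def)
  have pw: "predn n (w l) = (x + l) mod n" for l
  proof -
    have "predn n (w l) = ((x + 1 + l) mod n + (n - 1)) mod n" unfolding predn_def w_def using n by simp
    also have "\<dots> = (x + 1 + l + (n - 1)) mod n" by (simp add: mod_add_left_eq)
    also have "x + 1 + l + (n - 1) = (x + l) + n" using n by simp
    finally show ?thesis by simp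
  qed
  have gw: "g (Suc l) = int (f (w l))" for l by (simp add: g_def w_def)
  have cons: "int (ind (w l \<in> P)) - int (ind (w l \<in> Oc)) = g (Suc l) - g l" for l
    using I(4) wn[of l] pw[of l] gw[of l] by (simp add: g_def) (smt (verit) of_nat_add)
  have tel: "k \<le> n \<Longrightarrow> (\<Sum>l\<in>{k..<n}. int (ind (w l \<in> P)) - int (ind (w l \<in> Oc))) = g n - g k" for k
    unfolding cons by (rule sum_Suc_diff')
  have gn: "g n = int (f x)" using x by (simp add: g_def)
  show ?thesis
  proof
    assume fx: "0 < f x"
    have fr: "Q - Oc \<noteq> {}"
    proof
      assume "Q - Oc = {}"
      then have "card Q \<le> card Oc" using I(2) fQ by (simp add: card_mono finite_subset)
      then show False using I(3) card by simp
    qed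
    then obtain z where z: "z \<in> Q - Oc" by blast
    then have zn: "z < n" using Q by auto
    obtain l where l: "l < n" "w l = z" using mod_hit[OF n zn, of "x + 1"] by (auto simp: w_def)
    define S where "S = {l. l < n \<and> w l \<in> Q - Oc}"
    have Sfin: "finite S" by (simp add: S_def)
    have Sne: "S \<noteq> {}" using l z by (auto simp: S_def)
    define l0 where "l0 = Max S"
    have l0S: "l0 \<in> S" unfolding l0_def using Sfin Sne by (rule Max_in)
    have l0max: "l' \<in> S \<Longrightarrow> l' \<le> l0" for l' unfolding l0_def using Sfin by simp
    have wlast: "w (n - 1) = x" using n x by (simp add: w_def)
    have l0n: "Suc l0 < n"
    proof -
      have "l0 < n" using l0S by (simp add: S_def)
      moreover have "l0 \<noteq> n - 1" using l0S wlast x by (auto simp: S_def)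
      ultimately show ?thesis by simp
    qed
    have eqQO: "int (ind (w l \<in> Q)) = int (ind (w l \<in> Oc))" if "l \<in> {Suc l0..<n}" for l
    proof -
      have "l \<notin> S" using l0max that by fastforce
      then show ?thesis using that I(2) by (auto simp: S_def ind_def)
    qed
    have fz: "f (w l0) = 0"
    proof -
      have "w l0 \<in> Q - Oc" using l0S by (simp add: S_def)
      then show ?thesis using I(4) I(5) wn[of l0] by (simp add: ind_def)
    qed
    have "(\<Sum>l\<in>{Suc l0..<n}. int (ind (w l \<in> P)) - int (ind (w l \<in> Q)))
        = (\<Sum>l\<in>{Suc l0..<n}. int (ind (w l \<in> P)) - int (ind (w l \<in> Oc)))"
      using eqQO by (intro sum.cong) auto
    also have "\<dots> = g n - g (Suc l0)" using tel l0n by simp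
    also have "\<dots> = int (f x)" using gn gw[of l0] fz by simp
    finally show "\<exists>k<n. 0 < (\<Sum>l\<in>{k..<n}. int (ind ((x + 1 + l) mod n \<in> P)) - int (ind ((x + 1 + l) mod n \<in> Q)))"
      using fx l0n by (intro exI[of _ "Suc l0"]) (simp add: w_def)
  next
    assume "\<exists>k<n. 0 < (\<Sum>l\<in>{k..<n}. int (ind ((x + 1 + l) mod n \<in> P)) - int (ind ((x + 1 + l) mod n \<in> Q)))"
    then obtain k where k: "k < n" and pos: "0 < (\<Sum>l\<in>{k..<n}. int (ind (w l \<in> P)) - int (ind (w l \<in> Q)))"
      by (auto simp: w_def)
    have "(\<Sum>l\<in>{k..<n}. int (ind (w l \<in> P)) - int (ind (w l \<in> Q)))
        \<le> (\<Sum>l\<in>{k..<n}. int (ind (w l \<in> P)) - int (ind (w l \<in> Oc)))"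
      using I(2) by (intro sum_mono) (auto simp: ind_def)
    also have "\<dots> = g n - g k" using tel k by simp
    also have "\<dots> \<le> int (f x)" using gn by (simp add: g_def)
    finally show "0 < f x" using pos by simp
  qed
qed


fun hh :: "nat \<Rightarrow> 'a::comm_ring_1 list \<Rightarrow> 'a" where
  "hh k [] = (if k = 0 then 1 else 0)"
| "hh k (x # xs) = (\<Sum>j\<le>k. x ^ j * hh (k - j) xs)"

lemma hh_rec:
  assumes "0 < k"
  shows "hh k (x # xs) = x * hh (k - 1) (x # xs) + hh k xs"
proof -
  obtain k' where k: "k = Suc k'" using assms by (cases k) auto
  have "hh k (x # xs) = (\<Sum>j\<le>Suc k'. x ^ j * hh (Suc k' - j) xs)" using k by simp
  also have "\<dots> = hh (Suc k') xs + (\<Sum>j\<le>k'. x ^ Suc j * hh (Suc k' - Suc j) xs)"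
    by (subst sum.atMost_Suc_shift) simp
  also have "(\<Sum>j\<le>k'. x ^ Suc j * hh (Suc k' - Suc j) xs) = x * hh k' (x # xs)"
    by (simp add: sum_distrib_left mult.assoc)
  finally show ?thesis using k by (simp add: add.commute)
qed

lemma hh_zero [simp]: "hh 0 xs = 1"
  by (induction xs) auto

definition EE :: "nat \<Rightarrow> nat \<Rightarrow> (nat \<Rightarrow> nat) set" where
  "EE k m = {e. (\<forall>j\<ge>m. e j = 0) \<and> (\<Sum>j<m. e j) = k}"

definition ccons :: "nat \<Rightarrow> (nat \<Rightarrow> nat) \<Rightarrow> nat \<Rightarrow> nat" where
  "ccons a e j = (case j of 0 \<Rightarrow> a | Suc j' \<Rightarrow> e j')"

lemma EE_0: "EE k 0 = (if k = 0 then {\<lambda>_. 0} else {})"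
  by (auto simp: EE_def)

lemma EE_Suc: "EE k (Suc m) = (\<lambda>(a, e). ccons a e) ` (SIGMA a:{..k}. EE (k - a) m)"
proof (rule set_eqI, rule iffI)
  fix e assume e: "e \<in> EE k (Suc m)"
  have sm: "(\<Sum>j<Suc m. e j) = e 0 + (\<Sum>j<m. e (Suc j))"
    by (rule sum.lessThan_Suc_shift)
  have "e = ccons (e 0) (\<lambda>j. e (Suc j))"
    by (rule ext) (simp add: ccons_def split: nat.split)
  moreover have "(e 0, \<lambda>j. e (Suc j)) \<in> (SIGMA a:{..k}. EE (k - a) m)"
    using e sm by (auto simp: EE_def)
  ultimately show "e \<in> (\<lambda>(a, e). ccons a e) ` (SIGMA a:{..k}. EE (k - a) m)"
    by (auto intro!: image_eqI[where x = "(e 0, \<lambda>j. e (Suc j))"])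
next
  fix e assume "e \<in> (\<lambda>(a, e). ccons a e) ` (SIGMA a:{..k}. EE (k - a) m)"
  then obtain a e' where a: "a \<le> k" and e': "e' \<in> EE (k - a) m" and e: "e = ccons a e'" by auto
  have "(\<Sum>j<Suc m. e j) = a + (\<Sum>j<m. e' j)"
    by (simp del: sum.lessThan_Suc add: sum.lessThan_Suc_shift e ccons_def)
  then show "e \<in> EE k (Suc m)" using a e'
    by (auto simp: EE_def e ccons_def split: nat.split)
qed

lemma finite_EE: "finite (EE k m)"
proof (induction m arbitrary: k)
  case 0 then show ?case by (simp add: EE_0)
next
  case (Suc m) then show ?case by (simp add: EE_Suc)
qed

lemma inj_ccons: "inj (\<lambda>(a, e). ccons a e)"
proof (rule injI, clarsimp)
  fix a e b f assume h: "ccons a e = ccons b f"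
  have "a = b" using fun_cong[OF h, of 0] by (simp add: ccons_def)
  moreover have "e = f"
  proof
    fix j show "e j = f j" using fun_cong[OF h, of "Suc j"] by (simp add: ccons_def)
  qed
  ultimately show "a = b \<and> e = f" by simp
qed

lemma hcomplete_EE: "hcomplete k xs = (\<Sum>e\<in>EE k (length xs). \<Prod>j<length xs. xs ! j ^ e j)"
  by (simp add: hcomplete_def EE_def)

lemma hcomplete_eq_hh: "hcomplete k xs = hh k xs"
proof (induction xs arbitrary: k)
  case Nil
  then show ?case by (simp add: hcomplete_EE EE_0)
next
  case (Cons x xs)
  let ?m = "length xs"
  have "hcomplete k (x # xs) = (\<Sum>e\<in>EE k (Suc ?m). \<Prod>j<Suc ?m. (x # xs) ! j ^ e j)"
    by (simp add: hcomplete_EE)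
  also have "\<dots> = (\<Sum>p\<in>(SIGMA a:{..k}. EE (k - a) ?m). \<Prod>j<Suc ?m. (x # xs) ! j ^ ccons (fst p) (snd p) j)"
    unfolding EE_Suc
    by (subst sum.reindex) (auto intro: inj_on_subset[OF inj_ccons] simp: case_prod_beta)
  also have "\<dots> = (\<Sum>a\<le>k. \<Sum>e\<in>EE (k - a) ?m. \<Prod>j<Suc ?m. (x # xs) ! j ^ ccons a e j)"
    using sum.Sigma[of "{..k}" "\<lambda>a. EE (k-a) ?m" "\<lambda>a e. \<Prod>j<Suc ?m. (x # xs) ! j ^ ccons a e j", symmetric]
    by (simp add: finite_EE case_prod_beta)
  also have "\<dots> = (\<Sum>a\<le>k. x ^ a * (\<Sum>e\<in>EE (k - a) ?m. \<Prod>j<?m. xs ! j ^ e j))"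
    by (simp del: prod.lessThan_Suc add: prod.lessThan_Suc_shift ccons_def sum_distrib_left)
  also have "\<dots> = hh k (x # xs)"
    by (simp add: Cons.IH[symmetric] hcomplete_EE)
  finally show ?case .
qed


definition cnt :: "nat \<Rightarrow> nat list \<Rightarrow> nat" where
  "cnt s xs = length (filter (\<lambda>p. p \<le> s) xs)"

definition vals :: "nat \<Rightarrow> nat list list \<Rightarrow> bool list \<Rightarrow> int list" where
  "vals s a qs = map (\<lambda>(as, q). int (cnt s as) - (if q then 1 else 0)) (zip a qs)"

definition pos_arc :: "int list \<Rightarrow> bool" where
  "pos_arc xs \<longleftrightarrow> (\<exists>k<length xs. 0 < sum_list (drop k xs))"

definition cnd :: "nat \<Rightarrow> nat list list \<Rightarrow> bool list \<Rightarrow> nat \<Rightarrow> bool" where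
  "cnd s a qs y \<longleftrightarrow> pos_arc (rotate (Suc y) (vals s a qs))"

definition level :: "nat \<Rightarrow> nat list list \<Rightarrow> bool list \<Rightarrow> nat \<Rightarrow> nat" where
  "level i a qs y = Min ({s \<in> {1..<i}. cnd s a qs y} \<union> {i})"

definition WW :: "nat \<Rightarrow> (nat \<Rightarrow> 'a::comm_ring_1) \<Rightarrow> nat list list \<Rightarrow> bool list \<Rightarrow> 'a" where
  "WW i t a qs = (\<Prod>y<length qs. if qs ! y then 1 else t (level i a qs y))"

definition QS :: "nat \<Rightarrow> nat \<Rightarrow> bool list set" where
  "QS N c = {qs. length qs = N \<and> length (filter id qs) = c}"

definition FF :: "nat \<Rightarrow> (nat \<Rightarrow> 'a::comm_ring_1) \<Rightarrow> nat list list \<Rightarrow> nat \<Rightarrow> 'a" where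
  "FF i t a c = (\<Sum>qs\<in>QS (length a) c. WW i t a qs)"

definition RL :: "nat \<Rightarrow> (nat \<Rightarrow> 'a::comm_ring_1) \<Rightarrow> nat list list \<Rightarrow> nat \<Rightarrow> 'a list" where
  "RL i t a c = concat (map (\<lambda>s. replicate (count_list (concat a) s) (t s)) [1..<i])
                 @ replicate (c - length (concat a) + 1) (t i)"

definition valid :: "nat \<Rightarrow> nat list list \<Rightarrow> bool" where
  "valid i a \<longleftrightarrow> (\<forall>p\<in>set (concat a). 1 \<le> p \<and> p < i)"

lemma finite_QS: "finite (QS N c)"
proof -
  have "QS N c \<subseteq> {xs. set xs \<subseteq> UNIV \<and> length xs = N}" by (auto simp: QS_def)
  moreover have "finite {xs. set xs \<subseteq> (UNIV::bool set) \<and> length xs = N}"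
    by (rule finite_lists_length_eq) simp
  ultimately show ?thesis by (rule finite_subset)
qed

lemma QS_Suc: "QS (Suc N) c = Cons False ` QS N c \<union> (if c = 0 then {} else Cons True ` QS N (c - 1))"
proof (rule set_eqI)
  fix qs show "qs \<in> QS (Suc N) c \<longleftrightarrow> qs \<in> Cons False ` QS N c \<union> (if c = 0 then {} else Cons True ` QS N (c - 1))"
    by (cases qs) (auto simp: QS_def)
qed

lemma sum_QS_Suc:
  "(\<Sum>qs\<in>QS (Suc N) c. g qs) = (\<Sum>qs\<in>QS N c. g (False # qs))
      + (if c = 0 then 0 else (\<Sum>qs\<in>QS N (c - 1). g (True # qs)))"
proof (cases "c = 0")
  case True
  then show ?thesis by (simp add: QS_Suc sum.reindex)
next
  case False
  have d: "Cons False ` QS N c \<inter> Cons True ` QS N (c - 1) = {}" by auto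
  have "(\<Sum>qs\<in>QS (Suc N) c. g qs) = (\<Sum>qs\<in>Cons False ` QS N c. g qs) + (\<Sum>qs\<in>Cons True ` QS N (c - 1). g qs)"
    using False sum.union_disjoint[OF finite_imageI[OF finite_QS] finite_imageI[OF finite_QS] d, of g] by (simp add: QS_Suc)
  then show ?thesis using False by (simp add: sum.reindex)
qed

lemma QS_full: "QS N N = {replicate N True}"
proof (rule set_eqI)
  fix qs
  show "qs \<in> QS N N \<longleftrightarrow> qs \<in> {replicate N True}"
  proof
    assume "qs \<in> QS N N"
    then have "length (filter id qs) = length qs" "length qs = N" by (auto simp: QS_def)
    then have "\<forall>x\<in>set qs. id x" using length_filter_less[of _ qs id] by fastforce
    then show "qs \<in> {replicate N True}" using \<open>length qs = N\<close>
      by (auto intro: replicate_eqI)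
  qed (simp add: QS_def)
qed

lemma count_list_rotate[simp]: "count_list (rotate n xs) x = count_list xs x"
  by (metis append_take_drop_id count_list_append add.commute rotate_drop_take)

lemma length_filter_rotate[simp]: "length (filter P (rotate n xs)) = length (filter P xs)"
  by (metis append_take_drop_id filter_append length_append add.commute rotate_drop_take)

lemma concat_rotate_count: "count_list (concat (rotate n xs)) x = count_list (concat xs) x"
proof -
  have "concat (rotate n xs) = concat (drop (n mod length xs) xs) @ concat (take (n mod length xs) xs)"
    by (simp add: rotate_drop_take)
  moreover have "concat xs = concat (take (n mod length xs) xs) @ concat (drop (n mod length xs) xs)"
    by (metis append_take_drop_id concat_append)
  ultimately show ?thesis by simp
qed

lemma length_concat_rotate: "length (concat (rotate n xs)) = length (concat xs)"
proof -
  have "concat (rotate n xs) = concat (drop (n mod length xs) xs) @ concat (take (n mod length xs) xs)"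
    by (simp add: rotate_drop_take)
  moreover have "concat xs = concat (take (n mod length xs) xs) @ concat (drop (n mod length xs) xs)"
    by (metis append_take_drop_id concat_append)
  ultimately show ?thesis by simp
qed

lemma set_concat_rotate[simp]: "set (concat (rotate n xs)) = set (concat xs)"
  by simp

lemma RL_rotate: "RL i t (rotate r a) c = RL i t a c"
  by (simp add: RL_def concat_rotate_count length_concat_rotate)

lemma valid_rotate: "valid i (rotate r a) = valid i a"
  by (simp add: valid_def)

lemma zip_rotate: "length a = length b \<Longrightarrow> zip (rotate r a) (rotate r b) = rotate r (zip a b)"
proof (rule nth_equalityI)
  fix j assume h: "length a = length b" "j < length (zip (rotate r a) (rotate r b))"
  then have "0 < length b" by (cases b) auto
  then have "(r + j) mod length b < length b" by simp
  with h show "zip (rotate r a) (rotate r b) ! j = rotate r (zip a b) ! j"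
    by (simp add: nth_rotate nth_zip)
qed simp

lemma vals_rotate: "length a = length qs \<Longrightarrow> vals s (rotate r a) (rotate r qs) = rotate r (vals s a qs)"
  by (simp add: vals_def zip_rotate rotate_map)

lemma length_vals[simp]: "length (vals s a qs) = min (length a) (length qs)"
  by (simp add: vals_def)

lemma cnd_rotate:
  assumes "length a = length qs" "0 < length qs"
  shows "cnd s (rotate r a) (rotate r qs) y = cnd s a qs ((y + r) mod length qs)"
proof -
  let ?V = "vals s a qs"
  have L: "length ?V = length qs" using assms by simp
  have "rotate (Suc y) (rotate r ?V) = rotate (Suc y + r) ?V" by (simp add: rotate_rotate)
  also have "\<dots> = rotate (Suc ((y + r) mod length qs)) ?V"
    by (subst rotate_conv_mod, subst (2) rotate_conv_mod) (simp add: assms(1) mod_Suc_eq)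
  finally show ?thesis using assms by (simp add: cnd_def vals_rotate)
qed

lemma level_rotate:
  assumes "length a = length qs" "0 < length qs"
  shows "level i (rotate r a) (rotate r qs) y = level i a qs ((y + r) mod length qs)"
  using cnd_rotate[OF assms] by (simp add: level_def)

lemma bij_rot: fixes n r :: nat assumes n: "0 < n" shows "bij_betw (\<lambda>y. (y + r) mod n) {..<n} {..<n}"
proof (rule bij_betw_byWitness[where f' = "\<lambda>z. (z + (n - r mod n)) mod n"])
  show "\<forall>y\<in>{..<n}. ((y + r) mod n + (n - r mod n)) mod n = y"
  proof
    fix y assume y: "y \<in> {..<n}"
    have "((y + r) mod n + (n - r mod n)) mod n = (y + r + (n - r mod n)) mod n"
      by (simp add: mod_add_left_eq)
    also have "y + r + (n - r mod n) = y + n + (r - r mod n)"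
      using mod_less_divisor[OF n, of r] mod_less_eq_dividend[of r n] by linarith
    also have "(y + n + (r - r mod n)) mod n = y"
      using y by (simp add: minus_mod_eq_mult_div)
    finally show "((y + r) mod n + (n - r mod n)) mod n = y" .
  qed
  show "\<forall>z\<in>{..<n}. ((z + (n - r mod n)) mod n + r) mod n = z"
  proof
    fix z assume z: "z \<in> {..<n}"
    have "((z + (n - r mod n)) mod n + r) mod n = (z + (n - r mod n) + r) mod n"
      by (simp add: mod_add_left_eq)
    also have "z + (n - r mod n) + r = z + n + (r - r mod n)"
      using mod_less_divisor[OF n, of r] mod_less_eq_dividend[of r n] by linarith
    also have "(z + n + (r - r mod n)) mod n = z"
      using z by (simp add: minus_mod_eq_mult_div)
    finally show "((z + (n - r mod n)) mod n + r) mod n = z" .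
  qed
  show "(\<lambda>y. (y + r) mod n) ` {..<n} \<subseteq> {..<n}" using n by auto
  show "(\<lambda>z. (z + (n - r mod n)) mod n) ` {..<n} \<subseteq> {..<n}" using n by auto
qed

lemma prod_rot: fixes n r :: nat assumes "0 < n" shows "(\<Prod>y<n. g ((y + r) mod n)) = (\<Prod>z<n. g z)"
  using prod.reindex_bij_betw[OF bij_rot[OF assms], of g] by simp

lemma WW_rotate:
  assumes "length a = length qs"
  shows "WW i t (rotate r a) (rotate r qs) = WW i t a qs"
proof (cases "length qs = 0")
  case True then show ?thesis by (simp add: WW_def)
next
  case False
  then have n: "0 < length qs" by simp
  have "WW i t (rotate r a) (rotate r qs)
     = (\<Prod>y<length qs. (\<lambda>z. if qs ! z then 1 else t (level i a qs z)) ((y + r) mod length qs))"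
    unfolding WW_def
    by (rule prod.cong) (auto simp: nth_rotate level_rotate[OF assms n] add.commute)
  also have "\<dots> = WW i t a qs" unfolding WW_def by (rule prod_rot[OF n])
  finally show ?thesis .
qed

lemma FF_rotate: "FF i t (rotate r a) c = FF i t a c"
proof (cases "a = []")
  case True then show ?thesis by simp
next
  case False
  let ?N = "length a"
  have N: "0 < ?N" using False by simp
  have bij: "bij_betw (rotate r) (QS ?N c) (QS ?N c)"
  proof (rule bij_betw_byWitness[where f' = "rotate (?N - r mod ?N)"])
    show "\<forall>qs\<in>QS ?N c. rotate (?N - r mod ?N) (rotate r qs) = qs"
    proof
      fix qs assume "qs \<in> QS ?N c"
      then have l: "length qs = ?N" by (simp add: QS_def)
      have "(?N - r mod ?N + r) mod ?N = (?N - r mod ?N + r mod ?N) mod ?N" by (simp add: mod_add_right_eq)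
      also have "\<dots> = 0" using N by (simp add: less_imp_le)
      finally have "(?N - r mod ?N + r) mod ?N = 0" .
      then show "rotate (?N - r mod ?N) (rotate r qs) = qs" by (simp add: rotate_rotate l)
    qed
    show "\<forall>qs\<in>QS ?N c. rotate r (rotate (?N - r mod ?N) qs) = qs"
    proof
      fix qs assume "qs \<in> QS ?N c"
      then have l: "length qs = ?N" by (simp add: QS_def)
      have "(r + (?N - r mod ?N)) mod ?N = (r mod ?N + (?N - r mod ?N)) mod ?N" by (simp add: mod_add_left_eq)
      also have "\<dots> = 0" using N by (simp add: less_imp_le)
      finally have "(r + (?N - r mod ?N)) mod ?N = 0" .
      then show "rotate r (rotate (?N - r mod ?N) qs) = qs" by (simp add: rotate_rotate l)
    qed
  qed (auto simp: QS_def)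
  have "FF i t (rotate r a) c = (\<Sum>qs\<in>QS ?N c. WW i t (rotate r a) qs)" by (simp add: FF_def)
  also have "\<dots> = (\<Sum>qs\<in>QS ?N c. WW i t (rotate r a) (rotate r qs))"
    using sum.reindex_bij_betw[OF bij, of "WW i t (rotate r a)"] by simp
  also have "\<dots> = (\<Sum>qs\<in>QS ?N c. WW i t a qs)"
    by (rule sum.cong) (auto simp: QS_def WW_rotate)
  finally show ?thesis by (simp add: FF_def)
qed


lemma pos_arc_merge:
  assumes v0: "0 \<le> v0"
  shows "pos_arc (A @ v0 # v1 # B) \<longleftrightarrow> pos_arc (A @ (v0 + v1) # B)"
proof
  assume "pos_arc (A @ v0 # v1 # B)"
  then obtain k where k: "k < length A + 2 + length B" and s: "0 < sum_list (drop k (A @ v0 # v1 # B))"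
    by (auto simp: pos_arc_def)
  show "pos_arc (A @ (v0 + v1) # B)"
  proof (cases "k \<le> length A")
    case True
    then have "sum_list (drop k (A @ (v0 + v1) # B)) = sum_list (drop k (A @ v0 # v1 # B))" by simp
    then show ?thesis using s True by (auto simp: pos_arc_def intro!: exI[of _ k])
  next
    case False
    show ?thesis
    proof (cases "k = Suc (length A)")
      case True
      then have "sum_list (drop k (A @ v0 # v1 # B)) = v1 + sum_list B" by simp
      moreover have "sum_list (drop (length A) (A @ (v0 + v1) # B)) = v0 + v1 + sum_list B" by simp
      ultimately show ?thesis using s v0 by (auto simp: pos_arc_def intro!: exI[of _ "length A"])
    next
      case False2: False
      define j where "j = k - Suc (Suc (length A))"
      have j: "k = Suc (Suc (length A + j))" using False False2 unfolding j_def by linarith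
      have "sum_list (drop k (A @ v0 # v1 # B)) = sum_list (drop j B)" using j by simp
      moreover have "sum_list (drop (Suc (length A + j)) (A @ (v0 + v1) # B)) = sum_list (drop j B)" by simp
      ultimately show ?thesis using s k j by (auto simp: pos_arc_def intro!: exI[of _ "Suc (length A + j)"])
    qed
  qed
next
  assume "pos_arc (A @ (v0 + v1) # B)"
  then obtain k where k: "k < length A + 1 + length B" and s: "0 < sum_list (drop k (A @ (v0 + v1) # B))"
    by (auto simp: pos_arc_def)
  show "pos_arc (A @ v0 # v1 # B)"
  proof (cases "k \<le> length A")
    case True
    then have "sum_list (drop k (A @ (v0 + v1) # B)) = sum_list (drop k (A @ v0 # v1 # B))" by simp
    then show ?thesis using s True by (auto simp: pos_arc_def intro!: exI[of _ k])
  next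
    case False
    define j where "j = k - Suc (length A)"
    have j: "k = Suc (length A + j)" using False unfolding j_def by linarith
    have "sum_list (drop k (A @ (v0 + v1) # B)) = sum_list (drop j B)" using j by simp
    moreover have "sum_list (drop (Suc (Suc (length A + j))) (A @ v0 # v1 # B)) = sum_list (drop j B)" by simp
    ultimately show ?thesis using s k j by (auto simp: pos_arc_def intro!: exI[of _ "Suc (Suc (length A + j))"])
  qed
qed

lemma rot2: assumes "y \<le> length vr"
  shows "rotate (Suc (Suc y)) (v0 # v1 # vr) = drop y vr @ v0 # v1 # take y vr"
proof -
  have "v0 # v1 # vr = (v0 # v1 # take y vr) @ drop y vr" by simp
  moreover have "length (v0 # v1 # take y vr) = Suc (Suc y)" using assms by simp
  ultimately show ?thesis by (metis rotate_append)
qed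

lemma rot1: assumes "y \<le> length vr"
  shows "rotate (Suc y) (w # vr) = drop y vr @ w # take y vr"
proof -
  have "w # vr = (w # take y vr) @ drop y vr" by simp
  moreover have "length (w # take y vr) = Suc y" using assms by simp
  ultimately show ?thesis by (metis rotate_append)
qed

lemma pos_arc_merge_rot:
  assumes "0 \<le> v0" "y \<le> length vr"
  shows "pos_arc (rotate (Suc (Suc y)) (v0 # v1 # vr)) \<longleftrightarrow> pos_arc (rotate (Suc y) ((v0 + v1) # vr))"
  unfolding rot2[OF assms(2)] rot1[OF assms(2)] by (rule pos_arc_merge[OF assms(1)])

lemma pos_arc_nonpos: assumes "\<forall>v\<in>set xs. v \<le> 0" shows "\<not> pos_arc xs"
proof -
  have "sum_list (drop k xs) \<le> 0" for k
    by (rule sum_list_nonpos) (use assms in \<open>auto dest: in_set_dropD\<close>)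
  then show ?thesis unfolding pos_arc_def by (simp add: not_less)
qed

lemma vals_cons[simp]: "vals s (a0 # a) (q0 # qs) = (int (cnt s a0) - (if q0 then 1 else 0)) # vals s a qs"
  by (simp add: vals_def)

lemma cnt_append[simp]: "cnt s (xs @ ys) = cnt s xs + cnt s ys"
  by (simp add: cnt_def)

lemma cnt_zero: "\<forall>p\<in>set xs. s < p \<Longrightarrow> cnt s xs = 0"
  by (auto simp: cnt_def filter_empty_conv)

lemma cnt_pos: "s0 \<in> set xs \<Longrightarrow> s0 \<le> s \<Longrightarrow> 1 \<le> cnt s xs"
  by (induction xs) (auto simp: cnt_def)

lemma cnt_remove1_Suc: "s0 \<in> set xs \<Longrightarrow> s0 \<le> s \<Longrightarrow> Suc (cnt s (remove1 s0 xs)) = cnt s xs"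
  by (induction xs) (auto simp: cnt_def)

lemma cnt_remove1: "s0 \<in> set xs \<Longrightarrow> s0 \<le> s \<Longrightarrow> cnt s (remove1 s0 xs) = cnt s xs - 1"
  using cnt_remove1_Suc by fastforce

lemma cnd_false: "\<forall>p\<in>set (concat a). s < p \<Longrightarrow> \<not> cnd s a qs y"
proof -
  assume h: "\<forall>p\<in>set (concat a). s < p"
  have "\<forall>v\<in>set (vals s a qs). v \<le> 0"
    using h by (auto simp: vals_def cnt_zero dest!: set_zip_leftD)
  then show ?thesis unfolding cnd_def by (intro pos_arc_nonpos) simp
qed

lemma level_merge:
  assumes len: "length qr = length ar"
    and H: "\<forall>s\<in>{1..<i}. ((\<forall>p\<in>set (concat (a0#a1#ar)). s < p) \<and> (\<forall>p\<in>set (concat (b#ar)). s < p))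
              \<or> (0 \<le> int (cnt s a0) - (if q0 then 1 else 0) \<and>
                 int (cnt s b) = int (cnt s a0) - (if q0 then 1 else 0) + int (cnt s a1))"
    and y: "y < Suc (length qr)"
  shows "level i (a0#a1#ar) (q0#q1#qr) (Suc y) = level i (b#ar) (q1#qr) y"
proof -
  have "\<forall>s\<in>{1..<i}. cnd s (a0#a1#ar) (q0#q1#qr) (Suc y) = cnd s (b#ar) (q1#qr) y"
  proof
    fix s assume s: "s \<in> {1..<i}"
    show "cnd s (a0#a1#ar) (q0#q1#qr) (Suc y) = cnd s (b#ar) (q1#qr) y"
    proof (cases "(\<forall>p\<in>set (concat (a0#a1#ar)). s < p) \<and> (\<forall>p\<in>set (concat (b#ar)). s < p)")
      case True
      then show ?thesis using cnd_false by metis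
    next
      case False
      then have h: "0 \<le> int (cnt s a0) - (if q0 then 1 else 0)"
        "int (cnt s b) = int (cnt s a0) - (if q0 then 1 else 0) + int (cnt s a1)"
        using H s False by blast+
      have yl: "y \<le> length (vals s ar qr)" using y len by simp
      define v0 where "v0 = int (cnt s a0) - (if q0 then 1 else 0)"
      define v1 where "v1 = int (cnt s a1) - (if q1 then 1 else 0)"
      have e1: "vals s (a0#a1#ar) (q0#q1#qr) = v0 # v1 # vals s ar qr" by (simp add: v0_def v1_def)
      have e2: "vals s (b#ar) (q1#qr) = (v0 + v1) # vals s ar qr" using h(2) by (simp add: v0_def v1_def)
      show ?thesis unfolding cnd_def e1 e2
        by (rule pos_arc_merge_rot[OF h(1)[folded v0_def] yl])
    qed
  qed
  then have "{s \<in> {1..<i}. cnd s (a0#a1#ar) (q0#q1#qr) (Suc y)} = {s \<in> {1..<i}. cnd s (b#ar) (q1#qr) y}"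
    by blast
  then show ?thesis unfolding level_def by simp
qed

lemma WW_merge:
  assumes len: "length qr = length ar"
    and H: "\<forall>s\<in>{1..<i}. ((\<forall>p\<in>set (concat (a0#a1#ar)). s < p) \<and> (\<forall>p\<in>set (concat (b#ar)). s < p))
              \<or> (0 \<le> int (cnt s a0) - (if q0 then 1 else 0) \<and>
                 int (cnt s b) = int (cnt s a0) - (if q0 then 1 else 0) + int (cnt s a1))"
  shows "WW i t (a0#a1#ar) (q0#q1#qr) =
           (if q0 then 1 else t (level i (a0#a1#ar) (q0#q1#qr) 0)) * WW i t (b#ar) (q1#qr)"
proof -
  have "WW i t (a0#a1#ar) (q0#q1#qr) =
     (if q0 then 1 else t (level i (a0#a1#ar) (q0#q1#qr) 0)) *
     (\<Prod>y<Suc (length qr). if (q1#qr) ! y then 1 else t (level i (a0#a1#ar) (q0#q1#qr) (Suc y)))"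
    unfolding WW_def by (simp del: prod.lessThan_Suc add: prod.lessThan_Suc_shift)
  also have "(\<Prod>y<Suc (length qr). if (q1#qr) ! y then 1 else t (level i (a0#a1#ar) (q0#q1#qr) (Suc y)))
      = WW i t (b#ar) (q1#qr)"
    unfolding WW_def by (rule prod.cong) (auto simp: level_merge[OF len H] simp del: prod.lessThan_Suc)
  finally show ?thesis .
qed

lemma level_eq:
  assumes "1 \<le> s0" "s0 < i" "cnd s0 a qs y" "\<forall>s. 1 \<le> s \<longrightarrow> s < s0 \<longrightarrow> \<not> cnd s a qs y"
  shows "level i a qs y = s0"
  unfolding level_def
proof (rule Min_eqI)
  show "s0 \<in> {s \<in> {1..<i}. cnd s a qs y} \<union> {i}" using assms by auto
  fix s assume "s \<in> {s \<in> {1..<i}. cnd s a qs y} \<union> {i}"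
  then show "s0 \<le> s" using assms by (auto simp: not_less[symmetric])
qed simp

lemma level_all_false:
  assumes "\<forall>s. \<not> cnd s a qs y" shows "level i a qs y = i"
  using assms unfolding level_def by simp

lemma pos_arc_rot1: "0 < v0 \<Longrightarrow> pos_arc (rotate 1 (v0 # rest))"
  unfolding pos_arc_def by (auto intro!: exI[of _ "length rest"])


declare hh.simps(2)[simp del]

lemma GG_eq:
  fixes x :: "'a::comm_ring_1"
  shows "c \<le> N \<Longrightarrow> (\<Sum>qs\<in>QS N c. \<Prod>y<N. if qs ! y then 1 else x) = hh (N - c) (replicate (c + 1) x)"
proof (induction N arbitrary: c)
  case 0
  then have "QS 0 0 = {[]}" by (auto simp: QS_def)
  with 0 show ?case by simp
next
  case (Suc N)
  have P: "(\<Prod>y<Suc N. if (b # qs) ! y then 1 else x) = (if b then 1 else x) * (\<Prod>y<N. if qs ! y then 1 else x)" for b qs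
    by (simp del: prod.lessThan_Suc add: prod.lessThan_Suc_shift)
  have S: "(\<Sum>qs\<in>QS (Suc N) c. \<Prod>y<Suc N. if qs ! y then 1 else x) =
     x * (\<Sum>qs\<in>QS N c. \<Prod>y<N. if qs ! y then 1 else x) +
     (if c = 0 then 0 else (\<Sum>qs\<in>QS N (c - 1). \<Prod>y<N. if qs ! y then 1 else x))"
    by (simp only: sum_QS_Suc P) (simp add: sum_distrib_left)
  show ?case
  proof (cases "c = Suc N")
    case True
    then show ?thesis by (simp add: QS_full del: replicate.simps)
  next
    case False
    then have c: "c \<le> N" using Suc.prems by simp
    show ?thesis
    proof (cases "c = 0")
      case True
      have "(\<Sum>qs\<in>QS (Suc N) c. \<Prod>y<Suc N. if qs ! y then 1 else x) = x * hh N [x]"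
        unfolding S using Suc.IH[OF c] True by simp
      also have "\<dots> = hh (Suc N) [x]" using hh_rec[of "Suc N" x "[]"] by simp
      finally show ?thesis using True by simp
    next
      case c0: False
      have "(\<Sum>qs\<in>QS (Suc N) c. \<Prod>y<Suc N. if qs ! y then 1 else x)
          = x * hh (N - c) (replicate (c + 1) x) + hh (N - (c - 1)) (replicate (c - 1 + 1) x)"
        unfolding S using Suc.IH[OF c] Suc.IH[of "c - 1"] c c0 by simp
      also have "\<dots> = hh (Suc N - c) (x # replicate c x)"
        using hh_rec[of "Suc N - c" x "replicate c x"] c c0
        by (simp add: Suc_diff_le)
      finally show ?thesis by simp
    qed
  qed
qed

lemma FF_empty:
  assumes e: "concat a = []" and c: "c \<le> length a"
  shows "FF i t a c = hh (length a - c) (RL i t a c)"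
proof -
  have lv: "level i a qs y = i" for qs y
  proof (rule level_all_false)
    show "\<forall>s. \<not> cnd s a qs y" using cnd_false[of a] e by simp
  qed
  have "FF i t a c = (\<Sum>qs\<in>QS (length a) c. \<Prod>y<length a. if qs ! y then 1 else t i)"
    unfolding FF_def WW_def
  proof (rule sum.cong[OF refl])
    fix qs assume "qs \<in> QS (length a) c"
    then have l: "length qs = length a" by (simp add: QS_def)
    show "(\<Prod>y<length qs. if qs ! y then 1 else t (level i a qs y)) = (\<Prod>y<length a. if qs ! y then 1 else t i)"
      unfolding l by (rule prod.cong[OF refl]) (simp add: lv)
  qed
  also have "\<dots> = hh (length a - c) (replicate (c + 1) (t i))" by (rule GG_eq[OF c])
  moreover have Z: "concat (map (\<lambda>s. [] :: 'a list) xs) = []" for xs :: "nat list"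
    by (induction xs) simp_all
  ultimately show ?thesis by (simp add: RL_def e Z)
qed

lemma count_remove1: "count_list (remove1 x xs) y = count_list xs y - (if x = y \<and> x \<in> set xs then 1 else 0)"
  by (induction xs) auto

lemma RL_split:
  assumes v: "\<forall>p\<in>set X. 1 \<le> p \<and> p < i" and s0: "s0 \<in> set X" and mn: "\<forall>p\<in>set X. s0 \<le> p"
    and c: "length X \<le> c"
  shows "concat (map (\<lambda>s. replicate (count_list X s) (t s)) [1..<i]) @ replicate (c - length X + 1) (t i)
       = t s0 # (concat (map (\<lambda>s. replicate (count_list (remove1 s0 X) s) (t s)) [1..<i])
                 @ replicate ((c - 1) - length (remove1 s0 X) + 1) (t i))"
proof -
  have s0i: "1 \<le> s0" "s0 < i" using v s0 by auto
  have "[1..<i] = [1..<s0] @ [s0..<i]" using upt_add_eq_append[of 1 s0 "i - s0"] s0i by simp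
  also have "[s0..<i] = s0 # [Suc s0..<i]" using s0i by (simp add: upt_conv_Cons)
  finally have up: "[1..<i] = [1..<s0] @ s0 # [Suc s0..<i]" .
  have z1: "concat (map (\<lambda>s. replicate (count_list X s) (t s)) [1..<s0]) = []"
    using mn by (auto simp: count_list_0_iff not_le[symmetric])
  have z2: "concat (map (\<lambda>s. replicate (count_list (remove1 s0 X) s) (t s)) [1..<s0]) = []"
    using mn by (auto simp: count_remove1 count_list_0_iff not_le[symmetric])
  have r: "map (\<lambda>s. replicate (count_list (remove1 s0 X) s) (t s)) [Suc s0..<i]
         = map (\<lambda>s. replicate (count_list X s) (t s)) [Suc s0..<i]"
    by (auto simp: count_remove1)
  have cs: "count_list X s0 = Suc (count_list (remove1 s0 X) s0)"
    using s0 count_list_0_iff[of X s0] by (simp add: count_remove1)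
  have lr: "length (remove1 s0 X) = length X - 1" using s0 by (simp add: length_remove1)
  have lX: "1 \<le> length X" using s0 by (cases X) auto
  have "(c - 1) - length (remove1 s0 X) = c - length X" using lr lX c by simp
  then show ?thesis unfolding up
    by (simp only: map_append list.map concat_append concat.simps z1 z2 r cs replicate_Suc append.simps append_Nil append_assoc)
qed


lemma WW_F:
  assumes s0: "s0 \<in> set a0" and mn: "\<forall>p\<in>set (concat (a0#a1#rest)). s0 \<le> p"
    and s0i: "1 \<le> s0" "s0 < i" and len: "length qs = Suc (length rest)"
  shows "WW i t (a0#a1#rest) (False#qs) = t s0 * WW i t ((a0@a1)#rest) qs"
proof -
  obtain q1 qr where qs: "qs = q1 # qr" and lr: "length qr = length rest"
    using len by (cases qs) auto
  have H: "\<forall>s\<in>{1..<i}. ((\<forall>p\<in>set (concat (a0#a1#rest)). s < p) \<and> (\<forall>p\<in>set (concat ((a0@a1)#rest)). s < p))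
              \<or> (0 \<le> int (cnt s a0) - (if False then 1 else 0) \<and>
                 int (cnt s (a0@a1)) = int (cnt s a0) - (if False then 1 else 0) + int (cnt s a1))"
    by simp
  have c1: "1 \<le> cnt s0 a0" using cnt_pos[OF s0] by simp
  have lv: "level i (a0#a1#rest) (False#q1#qr) 0 = s0"
  proof (rule level_eq[OF s0i])
    show "cnd s0 (a0 # a1 # rest) (False # q1 # qr) 0"
      unfolding cnd_def vals_cons by (rule pos_arc_rot1[unfolded One_nat_def]) (use c1 in simp)
    show "\<forall>s. 1 \<le> s \<longrightarrow> s < s0 \<longrightarrow> \<not> cnd s (a0 # a1 # rest) (False # q1 # qr) 0"
    proof (intro allI impI)
      fix s assume s: "1 \<le> s" "s < s0"
      have "\<forall>p\<in>set (concat (a0#a1#rest)). s < p"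
      proof
        fix p assume "p \<in> set (concat (a0#a1#rest))"
        then have "s0 \<le> p" using mn by blast
        then show "s < p" using s(2) by linarith
      qed
      then show "\<not> cnd s (a0 # a1 # rest) (False # q1 # qr) 0" by (rule cnd_false)
    qed
  qed
  show ?thesis unfolding qs WW_merge[OF lr H] lv by simp
qed

lemma WW_T:
  assumes s0: "s0 \<in> set a0" and mn: "\<forall>p\<in>set (concat (a0#a1#rest)). s0 \<le> p"
    and len: "length qs = Suc (length rest)"
  shows "WW i t (a0#a1#rest) (True#qs) = WW i t ((remove1 s0 a0 @ a1)#rest) qs"
proof -
  obtain q1 qr where qs: "qs = q1 # qr" and lr: "length qr = length rest"
    using len by (cases qs) auto
  have H: "\<forall>s\<in>{1..<i}. ((\<forall>p\<in>set (concat (a0#a1#rest)). s < p) \<and> (\<forall>p\<in>set (concat ((remove1 s0 a0 @ a1)#rest)). s < p))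
              \<or> (0 \<le> int (cnt s a0) - (if True then 1 else 0) \<and>
                 int (cnt s (remove1 s0 a0 @ a1)) = int (cnt s a0) - (if True then 1 else 0) + int (cnt s a1))"
  proof
    fix s assume s: "s \<in> {1..<i}"
    show "((\<forall>p\<in>set (concat (a0#a1#rest)). s < p) \<and> (\<forall>p\<in>set (concat ((remove1 s0 a0 @ a1)#rest)). s < p))
              \<or> (0 \<le> int (cnt s a0) - (if True then 1 else 0) \<and>
                 int (cnt s (remove1 s0 a0 @ a1)) = int (cnt s a0) - (if True then 1 else 0) + int (cnt s a1))"
    proof (cases "s < s0")
      case True
      have "\<forall>p\<in>set (concat (a0#a1#rest)). s < p"
      proof
        fix p assume "p \<in> set (concat (a0#a1#rest))"
        then have "s0 \<le> p" using mn by blast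
        then show "s < p" using True by linarith
      qed
      moreover then have "\<forall>p\<in>set (concat ((remove1 s0 a0 @ a1)#rest)). s < p"
        using set_remove1_subset[of s0 a0] by auto
      ultimately show ?thesis by blast
    next
      case False
      then have le: "s0 \<le> s" by simp
      have c1: "1 \<le> cnt s a0" using cnt_pos[OF s0 le] .
      have "int (cnt s (remove1 s0 a0 @ a1)) = int (cnt s a0) - 1 + int (cnt s a1)"
        using cnt_remove1[OF s0 le] c1 by (simp add: of_nat_diff)
      then show ?thesis using c1 by simp
    qed
  qed
  show ?thesis unfolding qs WW_merge[OF lr H] by simp
qed

theorem FF_main:
  fixes t :: "nat \<Rightarrow> 'a::comm_ring_1"
  shows "length a = N \<Longrightarrow> valid i a \<Longrightarrow> length (concat a) \<le> c \<Longrightarrow> c \<le> N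
          \<Longrightarrow> FF i t a c = hh (N - c) (RL i t a c)"
proof (induction N arbitrary: a c)
  case 0
  then have "a = []" by simp
  then show ?case using FF_empty[of a c i t] 0 by simp
next
  case (Suc N)
  show ?case
  proof (cases "c = Suc N")
    case True
    have "FF i t a c = WW i t a (replicate (Suc N) True)"
      unfolding FF_def using True Suc.prems by (simp add: QS_full)
    also have "\<dots> = 1" unfolding WW_def by (intro prod.neutral ballI) (simp del: replicate.simps)
    finally show ?thesis using True by simp
  next
    case cN: False
    show ?thesis
    proof (cases "concat a = []")
      case True
      then show ?thesis using FF_empty[OF True, of c i t] Suc.prems by simp
    next
      case ne: False
      define X where "X = concat a"
      define s0 where "s0 = Min (set X)"
      have Xne: "set X \<noteq> {}" using ne X_def by simp
      have s0X: "s0 \<in> set X" unfolding s0_def using Xne by (intro Min_in) simp_all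
      have mn: "\<forall>p\<in>set X. s0 \<le> p" unfolding s0_def by simp
      have s0i: "1 \<le> s0" "s0 < i" using Suc.prems(2) s0X by (auto simp: valid_def X_def)
      have "\<exists>as\<in>set a. s0 \<in> set as" using s0X X_def by simp
      then obtain as where as: "as \<in> set a" "s0 \<in> set as" by blast
      then obtain x where x0: "x < length a" "a ! x = as" by (auto simp: in_set_conv_nth)
      then have x: "x < length a" "s0 \<in> set (a ! x)" using as by auto
      define ar where "ar = rotate x a"
      have la: "length ar = Suc N" using Suc.prems by (simp add: ar_def)
      have hd: "ar ! 0 = a ! x" using x(1) nth_rotate[where n=0 and m = x and xs = a] by (cases a) (auto simp: ar_def)
      have lX: "1 \<le> length X" using s0X by (cases X) auto
      have c1: "1 \<le> c" using lX Suc.prems(3) X_def by simp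
      have cN': "c \<le> N" using cN Suc.prems(4) by simp
      obtain a0 a1 rest where ar: "ar = a0 # a1 # rest"
        using la c1 cN' by (cases ar; cases "tl ar") auto
      have lrest: "Suc (length rest) = N" using la ar by simp
      have s0a0: "s0 \<in> set a0" using hd x(2) ar by simp
      have cX: "concat ar = a0 @ a1 @ concat rest" using ar by simp
      have setar: "set (concat ar) = set X" by (simp add: ar_def X_def)
      have mn': "\<forall>p\<in>set (concat (a0#a1#rest)). s0 \<le> p" using mn setar ar by simp
      have vX: "\<forall>p\<in>set X. 1 \<le> p \<and> p < i" using Suc.prems(2) by (simp add: valid_def X_def)
      have lcar: "length (concat ar) = length X" by (simp add: ar_def X_def length_concat_rotate)
      have FFa: "FF i t a c = FF i t ar c" by (simp add: ar_def FF_rotate)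
      have RLa: "RL i t a c = RL i t ar c" by (simp add: ar_def RL_rotate)
      define mgF where "mgF = (a0 @ a1) # rest"
      define mgT where "mgT = (remove1 s0 a0 @ a1) # rest"
      have lF: "length mgF = N" using lrest by (simp add: mgF_def)
      have lT: "length mgT = N" using lrest by (simp add: mgT_def)
      have cF: "concat mgF = concat ar" by (simp add: mgF_def cX)
      have cT: "concat mgT = remove1 s0 (concat ar)" using s0a0 by (simp add: mgT_def cX remove1_append)
      have e0: "FF i t ar c = (\<Sum>qs\<in>QS N c. WW i t ar (False # qs)) + (\<Sum>qs\<in>QS N (c - 1). WW i t ar (True # qs))"
        unfolding FF_def la using sum_QS_Suc[where N=N and c=c and g="WW i t ar"] c1 by simp
      have e1: "(\<Sum>qs\<in>QS N c. WW i t ar (False # qs)) = t s0 * FF i t mgF c"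
        unfolding FF_def sum_distrib_left lF
      proof (rule sum.cong[OF refl])
        fix qs assume "qs \<in> QS N c"
        then have "length qs = Suc (length rest)" using lrest by (simp add: QS_def)
        then show "WW i t ar (False # qs) = t s0 * WW i t mgF qs" unfolding ar mgF_def by (rule WW_F[OF s0a0 mn' s0i])
      qed
      have e1': "(\<Sum>qs\<in>QS N (c - 1). WW i t ar (True # qs)) = FF i t mgT (c - 1)"
        unfolding FF_def lT
      proof (rule sum.cong[OF refl])
        fix qs assume "qs \<in> QS N (c - 1)"
        then have "length qs = Suc (length rest)" using lrest by (simp add: QS_def)
        then show "WW i t ar (True # qs) = WW i t mgT qs" unfolding ar mgT_def by (rule WW_T[OF s0a0 mn'])
      qed
      have e2: "FF i t mgF c = hh (N - c) (RL i t mgF c)"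
      proof (rule Suc.IH)
        show "length mgF = N" using lrest by (simp add: mgF_def)
        show "valid i mgF" using vX setar cF by (simp add: valid_def)
        show "length (concat mgF) \<le> c" using cF lcar Suc.prems(3) X_def by simp
      qed (rule cN')
      have e3: "FF i t mgT (c - 1) = hh (N - (c - 1)) (RL i t mgT (c - 1))"
      proof (rule Suc.IH)
        show "length mgT = N" using lrest by (simp add: mgT_def)
        show "valid i mgT" using vX setar cT set_remove1_subset[of s0 "concat ar"] by (auto simp: valid_def)
        show "length (concat mgT) \<le> c - 1" using cT lcar Suc.prems(3) X_def s0X setar
          by (simp add: length_remove1)
        show "c - 1 \<le> N" using cN' by simp
      qed
      have e4: "RL i t mgF c = RL i t ar c" by (simp add: RL_def cF)
      have e5: "RL i t ar c = t s0 # RL i t mgT (c - 1)"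
        unfolding RL_def cT
      proof (rule RL_split)
        show "\<forall>p\<in>set (concat ar). 1 \<le> p \<and> p < i" using vX setar by simp
        show "s0 \<in> set (concat ar)" using s0X setar by simp
        show "\<forall>p\<in>set (concat ar). s0 \<le> p" using mn setar by simp
        show "length (concat ar) \<le> c" using lcar Suc.prems(3) X_def by simp
      qed
      have "FF i t ar c = t s0 * hh (N - c) (t s0 # RL i t mgT (c - 1)) + hh (N - (c - 1)) (RL i t mgT (c - 1))"
        unfolding e0 e1 e1' e2 e3 e4 e5 ..
      also have "\<dots> = hh (Suc N - c) (t s0 # RL i t mgT (c - 1))"
        using hh_rec[of "Suc N - c" "t s0" "RL i t mgT (c - 1)"] cN' c1
        by (simp add: Suc_diff_le)
      finally show ?thesis unfolding FFa RLa e5 .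
    qed
  qed
qed


lemma sum_list_drop: "sum_list (drop k xs) = (\<Sum>l\<in>{k..<length xs}. xs ! l)"
proof (cases "k \<le> length xs")
  case True
  have "sum_list (drop k xs) = (\<Sum>i = 0..<length xs - k. xs ! (i + k))"
    by (simp add: sum_list_sum_nth add.commute)
  also have "\<dots> = (\<Sum>l\<in>{0 + k..<(length xs - k) + k}. xs ! l)"
    by (rule sum.shift_bounds_nat_ivl[symmetric])
  also have "\<dots> = (\<Sum>l\<in>{k..<length xs}. xs ! l)" using True by simp
  finally show ?thesis .
next
  case False then show ?thesis by simp
qed

lemma split_sorted:
  "sorted (map g xs) \<Longrightarrow> xs = filter (\<lambda>k. g k \<le> s) xs @ filter (\<lambda>k. \<not> g k \<le> s) xs"
proof (induction xs)
  case Nil then show ?case by simp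
next
  case (Cons x xs)
  have IH: "xs = filter (\<lambda>k. g k \<le> s) xs @ filter (\<lambda>k. \<not> g k \<le> s) xs" using Cons by simp
  show ?case
  proof (cases "g x \<le> s")
    case True then show ?thesis using IH by simp
  next
    case False
    then have "\<forall>y\<in>set xs. \<not> g y \<le> s" using Cons.prems by auto
    then show ?thesis using False by (simp add: filter_empty_conv)
  qed
qed

lemma sorted_fst_map:
  assumes "sorted (map (\<lambda>k. (g k :: nat, k :: nat)) xs)" shows "sorted (map g xs)"
proof -
  have h: "\<forall>i j. i \<le> j \<longrightarrow> j < length xs \<longrightarrow> (g (xs!i), xs!i) \<le> (g (xs!j), xs!j)"
    using assms unfolding sorted_iff_nth_mono by simp
  have "\<forall>i j. i \<le> j \<longrightarrow> j < length xs \<longrightarrow> g (xs!i) \<le> g (xs!j)"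
  proof (intro allI impI)
    fix i j assume "i \<le> j" "j < length xs"
    then have "(g (xs!i), xs!i) \<le> (g (xs!j), xs!j)" using h by blast
    then show "g (xs!i) \<le> g (xs!j)" by (auto simp: less_eq_prod_simp)
  qed
  then show ?thesis unfolding sorted_iff_nth_mono by simp
qed

lemma step_keep: "snd st z = Some v \<Longrightarrow> snd (step n Q j s st) z = Some v"
  by (simp add: step_def Let_def)

lemma step_new: "snd st z = None \<Longrightarrow> snd (step n Q j s st) z \<in> {None, Some s}"
  by (simp add: step_def Let_def)

lemma step_own: assumes "j < n" shows "snd (step n Q j s st) j \<noteq> None"
proof -
  have v: "j \<in> set (map (\<lambda>d'. (j + d') mod n) [0..<Suc d])" for d
  proof -
    have "(0::nat) \<in> set [0..<Suc d]" by (simp del: upt_Suc)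
    moreover have "j = (j + 0) mod n" using assms by simp
    ultimately show ?thesis unfolding set_map by (rule rev_image_eqI)
  qed
  show ?thesis unfolding step_def Let_def snd_conv using v by simp
qed

lemma fold_keep: "snd st z = Some v \<Longrightarrow> snd (fold (\<lambda>k st. step n Q k (sz k) st) L st) z = Some v"
  by (induction L arbitrary: st) (auto simp: step_keep)

lemma fold_new:
  "\<forall>k\<in>set L. sz k = s' \<Longrightarrow> snd st z = None \<Longrightarrow> snd (fold (\<lambda>k st. step n Q k (sz k) st) L st) z \<in> {None, Some s'}"
proof (induction L arbitrary: st)
  case Nil then show ?case by simp
next
  case (Cons k L)
  have szk: "sz k = s'" using Cons.prems(1) by simp
  have "snd (step n Q k (sz k) st) z \<in> {None, Some (sz k)}" by (rule step_new[OF Cons.prems(2)])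
  then have "snd (step n Q k (sz k) st) z = None \<or> snd (step n Q k (sz k) st) z = Some s'" using szk by simp
  then show ?case
  proof
    assume "snd (step n Q k (sz k) st) z = None"
    then have "snd (fold (\<lambda>k st. step n Q k (sz k) st) L (step n Q k (sz k) st)) z \<in> {None, Some s'}"
      using Cons.IH Cons.prems(1) by simp
    then show ?thesis by simp
  next
    assume "snd (step n Q k (sz k) st) z = Some s'"
    then have "snd (fold (\<lambda>k st. step n Q k (sz k) st) L (step n Q k (sz k) st)) z = Some s'"
      by (rule fold_keep)
    then show ?thesis by simp
  qed
qed

lemma fold_own:
  "k0 \<in> set L \<Longrightarrow> k0 < n \<Longrightarrow> snd (fold (\<lambda>k st. step n Q k (sz k) st) L st) k0 \<noteq> None"
proof (induction L arbitrary: st)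
  case Nil then show ?case by simp
next
  case (Cons k L)
  show ?case
  proof (cases "k = k0")
    case True
    then obtain v where "snd (step n Q k (sz k) st) k0 = Some v" using step_own[OF Cons.prems(2)] by blast
    then have "snd (fold (\<lambda>k st. step n Q k (sz k) st) L (step n Q k (sz k) st)) k0 = Some v"
      by (rule fold_keep)
    then show ?thesis by simp
  next
    case False
    then have "k0 \<in> set L" using Cons.prems(1) by simp
    then show ?thesis using Cons.IH Cons.prems(2) by simp
  qed
qed

lemma count_list_filter: "count_list xs y = length (filter (\<lambda>x. x = y) xs)"
  by (induction xs) auto


definition hsz :: "enat \<Rightarrow> nat list" where
  "hsz x = (case x of enat j \<Rightarrow> [j] | \<infinity> \<Rightarrow> [])"

definition cfg :: "enat list \<Rightarrow> nat list list" where "cfg u = map hsz u"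

definition qsl :: "nat \<Rightarrow> nat set \<Rightarrow> bool list" where "qsl n Q = map (\<lambda>z. z \<in> Q) [0..<n]"

lemma length_cfg[simp]: "length (cfg u) = length u" by (simp add: cfg_def)
lemma length_qsl[simp]: "length (qsl n Q) = n" by (simp add: qsl_def)

lemma count_concat_cfg: "count_list (concat (cfg u)) j = count_list u (enat j)"
  by (induction u) (auto simp: cfg_def hsz_def split: enat.split)

lemma length_concat_cfg: "length (concat (cfg u)) = length (filter (\<lambda>x. x \<noteq> \<infinity>) u)"
  by (induction u) (auto simp: cfg_def hsz_def split: enat.split)

lemma set_concat_cfg: "p \<in> set (concat (cfg u)) \<longleftrightarrow> enat p \<in> set u"
  by (induction u) (auto simp: cfg_def hsz_def split: enat.split)

lemma psize_facts:
  assumes ht: "has_type u ms" and lm: "length ms = i - 1" and k: "k < length u"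
  shows "(u ! k = \<infinity> \<longrightarrow> psize i u k = i) \<and>
         (u ! k \<noteq> \<infinity> \<longrightarrow> 1 \<le> psize i u k \<and> psize i u k < i \<and> u ! k = enat (psize i u k))"
proof -
  have "u ! k \<in> set u" using k by simp
  then have "u ! k = \<infinity> \<or> (\<exists>j\<in>{1..length ms}. u ! k = enat j)" using ht by (auto simp: has_type_def)
  then show ?thesis using lm by (auto simp: psize_def)
qed

lemma psize_le: assumes "has_type u ms" "length ms = i - 1" "k < length u" "1 \<le> i"
  shows "1 \<le> psize i u k \<and> psize i u k \<le> i"
  using psize_facts[OF assms(1-3)] assms(4) by (cases "u ! k = \<infinity>") auto

lemma cnt_cfg:
  assumes "has_type u ms" "length ms = i - 1" "k < length u" "s < i"
  shows "cnt s (cfg u ! k) = ind (psize i u k \<le> s)"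
  using psize_facts[OF assms(1-3)] assms(3,4)
  by (cases "u ! k") (auto simp: cfg_def hsz_def cnt_def ind_def)

lemma vals_cfg:
  assumes "has_type u ms" "length ms = i - 1" "k < length u" "s < i"
  shows "vals s (cfg u) (qsl (length u) Q) ! k = int (ind (psize i u k \<le> s)) - int (ind (k \<in> Q))"
  using cnt_cfg[OF assms] assms(3) by (simp add: vals_def cfg_def qsl_def ind_def)

lemma cnd_cfg:
  assumes ht: "has_type u ms" and lm: "length ms = i - 1" and n: "0 < length u" and x: "x < length u" and s: "s < i"
  shows "cnd s (cfg u) (qsl (length u) Q) x \<longleftrightarrow>
    (\<exists>k<length u. 0 < (\<Sum>l\<in>{k..<length u}. int (ind ((x + 1 + l) mod length u \<in> {k. k < length u \<and> psize i u k \<le> s}))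
                          - int (ind ((x + 1 + l) mod length u \<in> Q))))"
proof -
  let ?n = "length u"
  let ?V = "vals s (cfg u) (qsl ?n Q)"
  have lV: "length ?V = ?n" by simp
  have "sum_list (drop k (rotate (Suc x) ?V)) =
        (\<Sum>l\<in>{k..<?n}. int (ind ((x + 1 + l) mod ?n \<in> {k. k < ?n \<and> psize i u k \<le> s})) - int (ind ((x + 1 + l) mod ?n \<in> Q)))" for k
  proof -
    have "sum_list (drop k (rotate (Suc x) ?V)) = (\<Sum>l\<in>{k..<?n}. rotate (Suc x) ?V ! l)"
      by (simp add: sum_list_drop lV)
    also have "\<dots> = (\<Sum>l\<in>{k..<?n}. ?V ! ((x + 1 + l) mod ?n))"
    proof (rule sum.cong[OF refl])
      fix l assume "l \<in> {k..<?n}"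
      then have "l < length ?V" by simp
      then have "rotate (Suc x) ?V ! l = ?V ! ((Suc x + l) mod length ?V)" by (rule nth_rotate)
      then show "rotate (Suc x) ?V ! l = ?V ! ((x + 1 + l) mod ?n)" by simp
    qed
    also have "\<dots> = (\<Sum>l\<in>{k..<?n}. int (ind ((x + 1 + l) mod ?n \<in> {k. k < ?n \<and> psize i u k \<le> s})) - int (ind ((x + 1 + l) mod ?n \<in> Q)))"
      by (rule sum.cong) (use n in \<open>auto simp: vals_cfg[OF ht lm _ s] ind_def\<close>)
    finally show ?thesis .
  qed
  then show ?thesis unfolding cnd_def pos_arc_def by (simp add: lV)
qed

lemma entry_order_facts:
  shows "distinct (entry_order i u)" "set (entry_order i u) = {0..<length u}"
    "sorted (map (psize i u) (entry_order i u))"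
proof -
  show "distinct (entry_order i u)" by (simp add: entry_order_def)
  show "set (entry_order i u) = {0..<length u}" by (simp add: entry_order_def)
  have "sorted (map (\<lambda>k. (psize i u k, k)) (entry_order i u))"
    unfolding entry_order_def by (rule sorted_sort_key)
  then show "sorted (map (psize i u) (entry_order i u))" by (rule sorted_fst_map)
qed

lemma card_finite_sites:
  assumes ht: "has_type u ms" and lm: "length ms = i - 1" and i: "1 \<le> i"
  shows "card {k. k < length u \<and> u ! k \<noteq> \<infinity>} = sum_list ms"
proof -
  have "card {k. k < length u \<and> u ! k \<noteq> \<infinity>} = length (concat (cfg u))"
    by (simp add: length_concat_cfg length_filter_conv_card)
  also have "\<dots> = (\<Sum>j\<in>{1..<i}. count_list (concat (cfg u)) j)"
  proof (rule sum_count_set[symmetric])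
    show "set (concat (cfg u)) \<subseteq> {1..<i}"
    proof
      fix p assume "p \<in> set (concat (cfg u))"
      then have "enat p \<in> set u" using set_concat_cfg[of p u] by blast
      then have "enat p = \<infinity> \<or> (\<exists>j\<in>{1..length ms}. enat p = enat j)" using ht by (auto simp: has_type_def)
      then show "p \<in> {1..<i}" using lm i by auto
    qed
  qed simp
  also have "\<dots> = (\<Sum>j\<in>{1..<i}. ms ! (j - 1))"
  proof (rule sum.cong[OF refl])
    fix j assume "j \<in> {1..<i}"
    then have "j \<in> {1..length ms}" using lm by auto
    then show "count_list (concat (cfg u)) j = ms ! (j - 1)"
    proof -
      have "count_list (concat (cfg u)) j = length (filter (\<lambda>x. x = enat j) u)"
        unfolding count_concat_cfg by (rule count_list_filter)
      then show ?thesis using ht \<open>j \<in> {1..length ms}\<close> by (simp add: has_type_def)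
    qed
  qed
  also have "\<dots> = (\<Sum>l\<in>{0..<i - 1}. ms ! l)"
  proof -
    have "(\<Sum>l\<in>{0 + 1..<(i - 1) + 1}. ms ! (l - 1)) = (\<Sum>l\<in>{0..<i - 1}. ms ! (l + 1 - 1))"
      by (rule sum.shift_bounds_nat_ivl)
    then show ?thesis using i by simp
  qed
  also have "\<dots> = sum_list ms" using lm by (simp add: sum_list_sum_nth)
  finally show ?thesis .
qed


lemma fv_level:
  assumes n0: "0 < length u" and i: "1 \<le> i" and lm: "length ms = i - 1" and ht: "has_type u ms"
    and Q: "Q \<subseteq> {..<length u}" and card: "sum_list ms < card Q"
    and x: "x < length u" "x \<notin> Q"
  shows "first_visitor i Q u x = Some (level i (cfg u) (qsl (length u) Q) x)"
proof -
  define n where "n = length u"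
  define ord where "ord = entry_order i u"
  define sz where "sz = psize i u"
  define FV where "FV L = snd (fold (\<lambda>k st. step n Q k (sz k) st) L ({}, \<lambda>_. None))" for L
  have n: "0 < n" using n0 by (simp add: n_def)
  have fvo: "first_visitor i Q u = FV ord" by (simp add: first_visitor_def FV_def n_def ord_def sz_def)
  have od: "distinct ord" "set ord = {0..<n}" "sorted (map sz ord)"
    using entry_order_facts[of i u] by (auto simp: ord_def n_def sz_def)
  have szb: "k < n \<Longrightarrow> 1 \<le> sz k \<and> sz k \<le> i" for k
    using psize_le[OF ht lm _ i] by (simp add: sz_def n_def)
  have FVapp: "FV (xs @ ys) = snd (fold (\<lambda>k st. step n Q k (sz k) st) ys (fold (\<lambda>k st. step n Q k (sz k) st) xs ({}, \<lambda>_. None)))" for xs ys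
    by (simp add: FV_def)
  have Ds: "FV (filter (\<lambda>k. sz k \<le> s) ord) x \<noteq> None \<longleftrightarrow> cnd s (cfg u) (qsl n Q) x" if s: "1 \<le> s" "s < i" for s
  proof -
    define L where "L = filter (\<lambda>k. sz k \<le> s) ord"
    define P where "P = {k. k < n \<and> psize i u k \<le> s}"
    have setL: "set L = P" using od(2) by (auto simp: L_def P_def sz_def)
    have dL: "distinct L" using od(1) by (simp add: L_def)
    have PF: "P \<subseteq> {k. k < length u \<and> u ! k \<noteq> \<infinity>}"
    proof
      fix k assume "k \<in> P"
      then have k: "k < length u" "psize i u k \<le> s" by (auto simp: P_def n_def)
      then have "u ! k \<noteq> \<infinity>" using psize_facts[OF ht lm k(1)] s(2) by auto
      then show "k \<in> {k. k < length u \<and> u ! k \<noteq> \<infinity>}" using k by simp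
    qed
    have "card P \<le> card {k. k < length u \<and> u ! k \<noteq> \<infinity>}" using PF by (intro card_mono) auto
    also have "\<dots> = sum_list ms" by (rule card_finite_sites[OF ht lm i])
    finally have cP: "card (set L) < card Q" using card setL by simp
    have Qn: "Q \<subseteq> {..<n}" using Q by (simp add: n_def)
    have sL: "set L \<subseteq> {..<n}" using setL by (auto simp: P_def)
    obtain f where f: "Inv n Q (set L) (fst (fold (\<lambda>k st. step n Q k (sz k) st) L ({}, \<lambda>_. None)))
                {z. snd (fold (\<lambda>k st. step n Q k (sz k) st) L ({}, \<lambda>_. None)) z \<noteq> None} f"
      using fold_inv[OF dL sL cP Qn n, of sz] by blast
    have xn: "x < n" using x by (simp add: n_def)
    have "FV L x \<noteq> None \<longleftrightarrow> 0 < f x"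
      using inv_D_iff[OF f xn x(2)] by (simp add: FV_def)
    also have "\<dots> \<longleftrightarrow> (\<exists>k<n. 0 < (\<Sum>l\<in>{k..<n}. int (ind ((x + 1 + l) mod n \<in> set L)) - int (ind ((x + 1 + l) mod n \<in> Q))))"
      by (rule inv_arc[OF f cP Qn n xn x(2)])
    also have "\<dots> \<longleftrightarrow> cnd s (cfg u) (qsl n Q) x"
      using cnd_cfg[OF ht lm n0 x(1) s(2), of Q] setL by (simp add: n_def P_def)
    finally show ?thesis by (simp add: L_def)
  qed
  have D0: "FV (filter (\<lambda>k. sz k \<le> 0) ord) x = None"
  proof -
    have "\<forall>k\<in>set ord. \<not> sz k \<le> 0"
    proof
      fix k assume "k \<in> set ord"
      then have "k < n" using od(2) by simp
      then show "\<not> sz k \<le> 0" using szb[of k] by simp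
    qed
    then have "filter (\<lambda>k. sz k \<le> 0) ord = []" by (simp add: filter_empty_conv)
    then show ?thesis by (simp add: FV_def)
  qed
  have G: "FV ord x = Some s"
    if s: "1 \<le> s" "s \<le> i" and none: "FV (filter (\<lambda>k. sz k \<le> s - 1) ord) x = None"
      and some: "FV (filter (\<lambda>k. sz k \<le> s) ord) x \<noteq> None" for s
  proof -
    define L1 where "L1 = filter (\<lambda>k. sz k \<le> s - 1) ord"
    define L2 where "L2 = filter (\<lambda>k. sz k \<le> s) ord"
    define R where "R = filter (\<lambda>k. \<not> sz k \<le> s) ord"
    define M where "M = filter (\<lambda>k. \<not> sz k \<le> s - 1) L2"
    have s2: "sorted (map sz L2)" unfolding L2_def by (rule sorted_filter[OF od(3)])
    have "L2 = filter (\<lambda>k. sz k \<le> s - 1) L2 @ M" unfolding M_def by (rule split_sorted[OF s2])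
    also have "filter (\<lambda>k. sz k \<le> s - 1) L2 = L1"
      unfolding L1_def L2_def by (simp add: filter_filter) (metis (lifting) diff_le_self le_trans)
    finally have L2s: "L2 = L1 @ M" .
    have Ms: "\<forall>k\<in>set M. sz k = s" by (auto simp: M_def L2_def)
    have "FV L2 x \<in> {None, Some s}"
      unfolding L2s FVapp by (rule fold_new[OF Ms]) (use none in \<open>simp add: FV_def L1_def\<close>)
    then have "FV L2 x = Some s" using some by (auto simp: L2_def)
    have ordS: "ord = L2 @ R" unfolding L2_def R_def by (rule split_sorted[OF od(3)])
    show ?thesis unfolding ordS FVapp
      by (rule fold_keep) (use \<open>FV L2 x = Some s\<close> in \<open>simp add: FV_def\<close>)
  qed
  let ?S = "{s \<in> {1..<i}. cnd s (cfg u) (qsl n Q) x}"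
  show ?thesis
  proof (cases "?S = {}")
    case True
    then have lv: "level i (cfg u) (qsl n Q) x = i" unfolding level_def by (simp only: Un_empty_left Min_singleton)
    have none: "FV (filter (\<lambda>k. sz k \<le> i - 1) ord) x = None"
    proof (cases "i = 1")
      case True then show ?thesis using D0 by simp
    next
      case False
      then have "\<not> cnd (i - 1) (cfg u) (qsl n Q) x" using \<open>?S = {}\<close> i by auto
      then show ?thesis using Ds[of "i - 1"] False i by simp
    qed
    have "filter (\<lambda>k. sz k \<le> i) ord = ord" using od(2) szb by (auto simp: filter_id_conv)
    then have some: "FV (filter (\<lambda>k. sz k \<le> i) ord) x \<noteq> None"
      using fold_own[of x ord n] od(2) x by (simp add: FV_def n_def)
    show ?thesis using G[OF i order_refl none some] fvo lv by (simp add: n_def)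
  next
    case False
    define m where "m = Min ?S"
    have fS: "finite ?S" by simp
    have mS: "m \<in> ?S" unfolding m_def using fS False by (rule Min_in)
    have mmin: "s \<in> ?S \<Longrightarrow> m \<le> s" for s unfolding m_def using fS by simp
    have lv: "level i (cfg u) (qsl n Q) x = m"
      unfolding level_def
    proof (rule Min_eqI)
      show "m \<in> ?S \<union> {i}" using mS by simp
      fix s assume "s \<in> ?S \<union> {i}"
      then show "m \<le> s" using mmin mS by auto
    qed simp
    have m: "1 \<le> m" "m < i" "cnd m (cfg u) (qsl n Q) x" using mS by auto
    have none: "FV (filter (\<lambda>k. sz k \<le> m - 1) ord) x = None"
    proof (cases "m = 1")
      case True then show ?thesis using D0 by simp
    next
      case False
      then have "\<not> cnd (m - 1) (cfg u) (qsl n Q) x" using mmin[of "m - 1"] m by fastforce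
      then show ?thesis using Ds[of "m - 1"] False m by simp
    qed
    have some: "FV (filter (\<lambda>k. sz k \<le> m) ord) x \<noteq> None" using Ds[of m] m by simp
    show ?thesis using G[OF m(1) _ none some] m(2) fvo lv by (simp add: n_def)
  qed
qed


lemma level_bounds: "1 \<le> i \<Longrightarrow> 1 \<le> level i a qs y \<and> level i a qs y \<le> i"
  unfolding level_def by (auto intro: Min_le)

lemma count_cfg_ms:
  assumes ht: "has_type u ms" and lm: "length ms = i - 1" and j: "j \<in> {1..<i}"
  shows "count_list (concat (cfg u)) j = ms ! (j - 1)"
proof -
  have "j \<in> {1..length ms}" using j lm by auto
  moreover have "count_list (concat (cfg u)) j = length (filter (\<lambda>x. x = enat j) u)"
    unfolding count_concat_cfg by (rule count_list_filter)
  ultimately show ?thesis using ht by (simp add: has_type_def)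
qed

lemma weight_eq:
  assumes n0: "0 < length u" and i: "1 \<le> i" and lm: "length ms = i - 1" and ht: "has_type u ms"
    and Q: "Q \<subseteq> {..<length u}" and card: "sum_list ms < card Q"
  shows "queue_weight i t Q u = WW i t (cfg u) (qsl (length u) Q)"
proof -
  define n where "n = length u"
  define lev where "lev y = level i (cfg u) (qsl n Q) y" for y
  define X where "X = {0..<n} - Q"
  have fv: "x \<in> X \<Longrightarrow> first_visitor i Q u x = Some (lev x)" for x
    using fv_level[OF n0 i lm ht Q card, of x] by (simp add: X_def lev_def n_def)
  have lb: "lev ` X \<subseteq> {1..i}" using level_bounds[OF i] by (auto simp: lev_def)
  have "queue_weight i t Q u = (\<Prod>s\<in>{1..i}. t s ^ card {x \<in> X. lev x = s})"
    unfolding queue_weight_def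
  proof (rule prod.cong[OF refl])
    fix s assume "s \<in> {1..i}"
    have "{x \<in> {0..<length u} - Q. first_visitor i Q u x = Some s} = {x \<in> X. lev x = s}"
      using fv by (auto simp: X_def n_def)
    then show "t s ^ card {x \<in> {0..<length u} - Q. first_visitor i Q u x = Some s} = t s ^ card {x \<in> X. lev x = s}"
      by simp
  qed
  also have "\<dots> = (\<Prod>s\<in>{1..i}. \<Prod>x\<in>{x \<in> X. lev x = s}. t (lev x))"
    by (rule prod.cong[OF refl]) simp
  also have "\<dots> = (\<Prod>x\<in>X. t (lev x))"
    by (rule prod.group) (use lb in \<open>auto simp: X_def\<close>)
  also have "\<dots> = WW i t (cfg u) (qsl (length u) Q)"
  proof -
    have "WW i t (cfg u) (qsl (length u) Q) = (\<Prod>y\<in>{..<n}. if y \<in> Q then 1 else t (lev y))"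
      unfolding WW_def lev_def n_def by (rule prod.cong) (auto simp: qsl_def)
    also have "\<dots> = (\<Prod>y\<in>{..<n} \<inter> {y. y \<in> Q}. 1) * (\<Prod>y\<in>{..<n} \<inter> - {y. y \<in> Q}. t (lev y))"
      by (rule prod.If_cases) simp
    also have "{..<n} \<inter> - {y. y \<in> Q} = X" by (auto simp: X_def)
    finally show ?thesis by simp
  qed
  finally show ?thesis .
qed

lemma sum_Q_eq:
  fixes g :: "bool list \<Rightarrow> 'a::comm_ring_1"
  shows "(\<Sum>Q\<in>{Q. Q \<subseteq> {0..<n} \<and> card Q = c}. g (qsl n Q)) = (\<Sum>qs\<in>QS n c. g qs)"
proof (rule sum.reindex_bij_witness[where j = "qsl n" and i = "\<lambda>qs. {z. z < n \<and> qs ! z}"])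
  fix Q assume "Q \<in> {Q. Q \<subseteq> {0..<n} \<and> card Q = c}"
  then have Q: "Q \<subseteq> {0..<n}" "card Q = c" by auto
  show "{z. z < n \<and> qsl n Q ! z} = Q" using Q by (auto simp: qsl_def)
  have "length (filter id (qsl n Q)) = card {z. z < n \<and> z \<in> Q}"
  proof -
    have "{i. i < n \<and> qsl n Q ! i} = {z. z < n \<and> z \<in> Q}" by (auto simp: qsl_def)
    then show ?thesis by (simp add: length_filter_conv_card)
  qed
  also have "{z. z < n \<and> z \<in> Q} = Q" using Q by auto
  finally show "qsl n Q \<in> QS n c" using Q by (simp add: QS_def id_def)
next
  fix qs assume "qs \<in> QS n c"
  then have qs: "length qs = n" "length (filter id qs) = c" by (auto simp: QS_def)
  show "qsl n {z. z < n \<and> qs ! z} = qs" using qs by (intro nth_equalityI) (auto simp: qsl_def)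
  have "card {z. z < n \<and> qs ! z} = c" using qs by (simp add: length_filter_conv_card)
  then show "{z. z < n \<and> qs ! z} \<in> {Q. Q \<subseteq> {0..<n} \<and> card Q = c}" by auto
qed simp


theorem lemma7p1:
  fixes n i mi :: nat and ms :: "nat list" and u :: "enat list"
    and t :: "nat \<Rightarrow> 'a::comm_ring_1"
  assumes "0 < n" and "1 \<le> i" and "length ms = i - 1" and "\<forall>m\<in>set ms. 0 < m"
    and "length u = n" and "has_type u ms"
    and "0 < mi" and "sum_list ms + mi \<le> n"
  shows "(\<Sum>Q\<in>{Q. Q \<subseteq> {0..<n} \<and> card Q = sum_list ms + mi}. queue_weight i t Q u)
         = hcomplete (n - (sum_list ms + mi))
             (concat (map (\<lambda>j. replicate (ms ! (j - 1)) (t j)) [1..<i]) @ replicate (mi + 1) (t i))"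
proof -
  note n0 = assms(1) and i = assms(2) and lm = assms(3) and lu = assms(5) and ht = assms(6)
    and mi = assms(7) and cn = assms(8)
  define c where "c = sum_list ms + mi"
  have n0': "0 < length u" using n0 lu by simp
  have lc: "length (concat (cfg u)) = sum_list ms"
    using card_finite_sites[OF ht lm i] by (simp add: length_concat_cfg length_filter_conv_card)
  have "(\<Sum>Q\<in>{Q. Q \<subseteq> {0..<n} \<and> card Q = c}. queue_weight i t Q u)
      = (\<Sum>Q\<in>{Q. Q \<subseteq> {0..<n} \<and> card Q = c}. WW i t (cfg u) (qsl n Q))"
  proof (rule sum.cong[OF refl])
    fix Q assume "Q \<in> {Q. Q \<subseteq> {0..<n} \<and> card Q = c}"
    then have Q: "Q \<subseteq> {..<length u}" "sum_list ms < card Q" using lu mi by (auto simp: c_def)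
    show "queue_weight i t Q u = WW i t (cfg u) (qsl n Q)"
      using weight_eq[OF n0' i lm ht Q] lu by simp
  qed
  also have "\<dots> = (\<Sum>qs\<in>QS n c. WW i t (cfg u) qs)" by (rule sum_Q_eq)
  also have "\<dots> = FF i t (cfg u) c" using lu by (simp add: FF_def)
  also have "\<dots> = hh (n - c) (RL i t (cfg u) c)"
  proof (rule FF_main)
    show "length (cfg u) = n" using lu by simp
    show "valid i (cfg u)"
      unfolding valid_def
    proof
      fix p assume "p \<in> set (concat (cfg u))"
      then have "enat p \<in> set u" using set_concat_cfg[of p u] by blast
      then have "enat p = \<infinity> \<or> (\<exists>j\<in>{1..length ms}. enat p = enat j)" using ht by (auto simp: has_type_def)
      then show "1 \<le> p \<and> p < i" using lm i by auto
    qed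
    show "length (concat (cfg u)) \<le> c" using lc by (simp add: c_def)
    show "c \<le> n" using cn by (simp add: c_def)
  qed
  also have "RL i t (cfg u) c = concat (map (\<lambda>j. replicate (ms ! (j - 1)) (t j)) [1..<i]) @ replicate (mi + 1) (t i)"
  proof -
    have M: "map (\<lambda>s. replicate (count_list (concat (cfg u)) s) (t s)) [1..<i]
        = map (\<lambda>j. replicate (ms ! (j - 1)) (t j)) [1..<i]"
      by (rule map_cong[OF refl]) (simp add: count_cfg_ms[OF ht lm])
    show ?thesis unfolding RL_def M by (simp add: lc c_def)
  qed
  finally show ?thesis by (simp add: c_def hcomplete_eq_hh)
qed


end
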